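(* Let $\mathbb M=(V,d)$ be a binary structure and let $A,B$ be robust modules of $\mathbb M$, each with at least two elements, such that $B\subsetneq A$, the Gallai quotients of $A$ and of $B$ are not prime, and $t(A)=t(B)$. Then there is a robust module $C$ with $B\subsetneq C\subsetneq A$ whose type is different from $t(A)$.
   Context: A binary structure over a set $W$ is a pair $\mathbb M=(V,d)$ with $d:V\times V\to W$. A module of $\mathbb M$ is a set $A\subseteq V$ such that $d(x,y)=d(x,y')$ and $d(y,x)=d(y',x)$ for all $x\in V\setminus A$ and $y,y'\in A$. A module is strong if for every module $B$, either $A\subseteq B$, $B\subseteq A$, or $A\cap B=\emptyset$. For $X\subseteq V$, $S_{\mathbb M}(X)$ is the intersection of all strong modules containing $X$. A module is robust if it is a singleton or equals $S_{\mathbb M}(\{x,y\})$ for some distinct $x,y\in V$. For a strong module $A$ and $x,y\in A$, put $x\equiv_A y$ iff $x=y$ or some strong module containing $x,y$ is properly contained in $A$; this is an equivalence relation whose classes (the components of $A$) are modules, and if $A$ is robust with at least two elements there are at least two components. For disjoint non-empty modules $X,Y$, $d(X,Y)$ denotes the common value of $d(x,y)$, $x\in X$, $y\in Y$. The Gallai quotient of a robust $A$ with $|A|\ge2$ is the binary structure on the set of components of $A$ given by $(I,J)\mapsto d(I,J)$ for $I\neq J$. It is prime if it has at least three elements and only trivial modules (empty, singletons, whole set). The type of $A$ is "prime" if its Gallai quotient is prime, and otherwise $t(A)$ is the set $\{d(I,J): I,J$ distinct components of $A\}$. *)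

theory Defs
  imports Main
begin

text \<open>A binary structure is a pair (V, d) with d : V x V -> W; we represent it by a
  carrier set V and a function d (only its values on V x V matter).\<close>

definition is_module :: "'a set \<Rightarrow> ('a \<Rightarrow> 'a \<Rightarrow> 'w) \<Rightarrow> 'a set \<Rightarrow> bool" where
  "is_module V d A \<longleftrightarrow> A \<subseteq> V \<and>
     (\<forall>x\<in>V - A. \<forall>y\<in>A. \<forall>y'\<in>A. d x y = d x y' \<and> d y x = d y' x)"

definition strong_module :: "'a set \<Rightarrow> ('a \<Rightarrow> 'a \<Rightarrow> 'w) \<Rightarrow> 'a set \<Rightarrow> bool" where
  "strong_module V d A \<longleftrightarrow> is_module V d A \<and>
     (\<forall>B. is_module V d B \<longrightarrow> A \<subseteq> B \<or> B \<subseteq> A \<or> A \<inter> B = {})"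

definition S_mod :: "'a set \<Rightarrow> ('a \<Rightarrow> 'a \<Rightarrow> 'w) \<Rightarrow> 'a set \<Rightarrow> 'a set" where
  "S_mod V d X = \<Inter>{A. strong_module V d A \<and> X \<subseteq> A}"

definition robust :: "'a set \<Rightarrow> ('a \<Rightarrow> 'a \<Rightarrow> 'w) \<Rightarrow> 'a set \<Rightarrow> bool" where
  "robust V d A \<longleftrightarrow> is_module V d A \<and>
     ((\<exists>x\<in>V. A = {x}) \<or> (\<exists>x\<in>V. \<exists>y\<in>V. x \<noteq> y \<and> A = S_mod V d {x, y}))"

definition comp_rel :: "'a set \<Rightarrow> ('a \<Rightarrow> 'a \<Rightarrow> 'w) \<Rightarrow> 'a set \<Rightarrow> 'a \<Rightarrow> 'a \<Rightarrow> bool" where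
  "comp_rel V d A x y \<longleftrightarrow> x \<in> A \<and> y \<in> A \<and>
     (x = y \<or> (\<exists>B. strong_module V d B \<and> x \<in> B \<and> y \<in> B \<and> B \<subset> A))"

definition components :: "'a set \<Rightarrow> ('a \<Rightarrow> 'a \<Rightarrow> 'w) \<Rightarrow> 'a set \<Rightarrow> 'a set set" where
  "components V d A = {{y \<in> A. comp_rel V d A x y} | x. x \<in> A}"

text \<open>d(X,Y) for disjoint nonempty modules: the common value of d(x,y).\<close>
definition dmod :: "('a \<Rightarrow> 'a \<Rightarrow> 'w) \<Rightarrow> 'a set \<Rightarrow> 'a set \<Rightarrow> 'w" where
  "dmod d X Y = d (SOME x. x \<in> X) (SOME y. y \<in> Y)"

definition gallai_d :: "('a \<Rightarrow> 'a \<Rightarrow> 'w) \<Rightarrow> 'a set \<Rightarrow> 'a set \<Rightarrow> 'w" where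
  "gallai_d d = dmod d"

definition prime_struct :: "'b set \<Rightarrow> ('b \<Rightarrow> 'b \<Rightarrow> 'w) \<Rightarrow> bool" where
  "prime_struct U e \<longleftrightarrow> (\<exists>a\<in>U. \<exists>b\<in>U. \<exists>c\<in>U. a \<noteq> b \<and> a \<noteq> c \<and> b \<noteq> c) \<and>
     (\<forall>X. is_module U e X \<longrightarrow> X = {} \<or> (\<exists>u. X = {u}) \<or> X = U)"

definition gallai_prime :: "'a set \<Rightarrow> ('a \<Rightarrow> 'a \<Rightarrow> 'w) \<Rightarrow> 'a set \<Rightarrow> bool" where
  "gallai_prime V d A \<longleftrightarrow> prime_struct (components V d A) (gallai_d d)"

datatype 'w mtype = Prime | Values "'w set"

definition type_of :: "'a set \<Rightarrow> ('a \<Rightarrow> 'a \<Rightarrow> 'w) \<Rightarrow> 'a set \<Rightarrow> 'w mtype" where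
  "type_of V d A = (if gallai_prime V d A then Prime
     else Values {dmod d I J | I J. I \<in> components V d A \<and> J \<in> components V d A \<and> I \<noteq> J})"

end

theory Submission
  imports Defs
begin



lemma modD: "is_module P e M \<Longrightarrow> x \<in> P \<Longrightarrow> x \<notin> M \<Longrightarrow> y \<in> M \<Longrightarrow> y' \<in> M
   \<Longrightarrow> e x y = e x y' \<and> e y x = e y' x"
  unfolding is_module_def by blast

lemma mod_sub: "is_module P e M \<Longrightarrow> M \<subseteq> P"
  unfolding is_module_def by blast

lemma modI: "M \<subseteq> P \<Longrightarrow> (\<And>x y y'. x \<in> P \<Longrightarrow> x \<notin> M \<Longrightarrow> y \<in> M \<Longrightarrow> y' \<in> M \<Longrightarrow> e x y = e x y' \<and> e y x = e y' x)
  \<Longrightarrow> is_module P e M"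
  unfolding is_module_def by blast

lemma mod_Inter: assumes a: "\<forall>G\<in>F. is_module P e G" and ne: "F \<noteq> {}" shows "is_module P e (\<Inter>F)"
proof (rule modI)
  obtain G0 where G0: "G0 \<in> F" using ne by blast
  show "\<Inter>F \<subseteq> P" using mod_sub[of P e G0] a G0 by blast
  fix x y y' assume x: "x \<in> P" "x \<notin> \<Inter>F" and y: "y \<in> \<Inter>F" and y': "y' \<in> \<Inter>F"
  obtain G where G: "G \<in> F" "x \<notin> G" using x(2) by blast
  have GM: "is_module P e G" using a G(1) by blast
  have "y \<in> G" "y' \<in> G" using y y' G(1) by blast+
  then show "e x y = e x y' \<and> e y x = e y' x" using modD[OF GM x(1) G(2)] by blast
qed

lemma mod_Int: "is_module P e G \<Longrightarrow> is_module P e H \<Longrightarrow> is_module P e (G \<inter> H)"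
  using mod_Inter[of "{G,H}" P e] by auto

lemma mod_Union_pt: assumes a: "\<forall>G\<in>F. is_module P e G \<and> c \<in> G" shows "is_module P e (\<Union>F)"
proof (rule modI)
  show "\<Union>F \<subseteq> P" using mod_sub a by blast
  fix x y y' assume x: "x \<in> P" "x \<notin> \<Union>F" and y: "y \<in> \<Union>F" and y': "y' \<in> \<Union>F"
  from y obtain G where G: "G \<in> F" "y \<in> G" by blast
  from y' obtain G' where G': "G' \<in> F" "y' \<in> G'" by blast
  have GM: "is_module P e G" "c \<in> G" using a G(1) by blast+
  have GM': "is_module P e G'" "c \<in> G'" using a G'(1) by blast+
  have xG: "x \<notin> G" "x \<notin> G'" using x(2) G(1) G'(1) by blast+
  have 1: "e x y = e x c \<and> e y x = e c x" using modD[OF GM(1) x(1) xG(1) G(2) GM(2)] .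
  have 2: "e x y' = e x c \<and> e y' x = e c x" using modD[OF GM'(1) x(1) xG(2) G'(2) GM'(2)] .
  show "e x y = e x y' \<and> e y x = e y' x" using 1 2 by metis
qed

lemma mod_Un: "is_module P e G \<Longrightarrow> is_module P e H \<Longrightarrow> c \<in> G \<Longrightarrow> c \<in> H \<Longrightarrow> is_module P e (G \<union> H)"
  using mod_Union_pt[of "{G,H}" P e c] by auto

lemma mod_Diff: assumes G: "is_module P e G" and H: "is_module P e H" and nsub: "\<not> H \<subseteq> G"
  shows "is_module P e (G - H)"
proof (rule modI)
  show "G - H \<subseteq> P" using mod_sub[OF G] by blast
  fix x y y' assume x: "x \<in> P" "x \<notin> G - H" and y: "y \<in> G - H" and y': "y' \<in> G - H"
  show "e x y = e x y' \<and> e y x = e y' x"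
  proof (cases "x \<in> G")
    case False thus ?thesis using modD[OF G x(1) False] y y' by blast
  next
    case True
    hence xH: "x \<in> H" using x by blast
    obtain c where c: "c \<in> H" "c \<notin> G" using nsub by blast
    have cP: "c \<in> P" using c mod_sub[OF H] by blast
    have yP: "y \<in> P" "y' \<in> P" using y y' mod_sub[OF G] by blast+
    have 1: "e y x = e y c \<and> e x y = e c y" using modD[OF H yP(1) _ xH c(1)] y by simp
    have 2: "e y' x = e y' c \<and> e x y' = e c y'" using modD[OF H yP(2) _ xH c(1)] y' by simp
    have 3: "e c y = e c y' \<and> e y c = e y' c" using modD[OF G cP c(2), of y y'] y y' by simp
    show ?thesis using 1 2 3 by simp
  qed
qed

definition ovl :: "'b set \<Rightarrow> ('b \<Rightarrow> 'b \<Rightarrow> 'w) \<Rightarrow> 'b set \<Rightarrow> 'b set \<Rightarrow> bool" where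
  "ovl P e G H \<longleftrightarrow> is_module P e G \<and> is_module P e H \<and> G \<inter> H \<noteq> {} \<and> \<not> G \<subseteq> H \<and> \<not> H \<subseteq> G"

definition ntm :: "'b set \<Rightarrow> ('b \<Rightarrow> 'b \<Rightarrow> 'w) \<Rightarrow> 'b set \<Rightarrow> bool" where
  "ntm P e M \<longleftrightarrow> is_module P e M \<and> (\<exists>a\<in>M. \<exists>b\<in>M. a \<noteq> b) \<and> M \<noteq> P"

lemma ovl_sym: "ovl P e G H \<Longrightarrow> ovl P e H G"
  unfolding ovl_def by blast

lemma not_strong_ov: "is_module P e N \<Longrightarrow> \<not> strong_module P e N \<Longrightarrow> \<exists>K. ovl P e N K"
  unfolding strong_module_def ovl_def by blast

lemma ovl_ntm: assumes "ovl P e G H" shows "ntm P e H"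
proof -
  have G: "is_module P e G" and H: "is_module P e H" using assms unfolding ovl_def by auto
  obtain a b where ab: "a \<in> G \<inter> H" "b \<in> H - G" using assms unfolding ovl_def by auto
  have ne: "a \<noteq> b" using ab by blast
  have 2: "\<exists>a\<in>H. \<exists>b\<in>H. a \<noteq> b" using ab ne by (metis DiffD1 IntD2)
  have 3: "H \<noteq> P" using assms mod_sub[OF G] unfolding ovl_def by auto
  show ?thesis unfolding ntm_def using H 2 3 by simp
qed

definition sig :: "'b set \<Rightarrow> ('b \<Rightarrow> 'b \<Rightarrow> 'w) \<Rightarrow> 'b set \<Rightarrow> 'b set \<Rightarrow> 'w \<times> 'w" where
  "sig P e G H = (e (SOME x. x \<in> G - H) (SOME c. c \<in> H - G), e (SOME c. c \<in> H - G) (SOME x. x \<in> G - H))"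

lemma sig_core: assumes "ovl P e G H" "x \<in> G - H" "y \<in> H" "g \<in> G" "c \<in> H - G"
  shows "(e x y, e y x) = (e g c, e c g)"
proof -
  have G: "is_module P e G" and H: "is_module P e H" using assms(1) unfolding ovl_def by auto
  have xP: "x \<in> P" and cP: "c \<in> P" using assms mod_sub[OF G] mod_sub[OF H] by auto
  have 1: "e x y = e x c \<and> e y x = e c x" using modD[OF H xP, of y c] assms(2,3,5) by simp
  have 2: "e c x = e c g \<and> e x c = e g c" using modD[OF G cP, of x g] assms(2,4,5) by simp
  show ?thesis using 1 2 by simp
qed

lemma sig1: assumes "ovl P e G H" "x \<in> G - H" "y \<in> H"
  shows "(e x y, e y x) = sig P e G H"
proof -
  have ex1: "\<exists>x. x \<in> G - H" and ex2: "\<exists>c. c \<in> H - G" using assms(1) unfolding ovl_def by auto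
  have a: "(SOME x. x \<in> G - H) \<in> G - H" using someI_ex[OF ex1] .
  have b: "(SOME c. c \<in> H - G) \<in> H - G" using someI_ex[OF ex2] .
  show ?thesis unfolding sig_def using sig_core[OF assms(1,2,3) _ b] a by blast
qed

lemma sig2: assumes "ovl P e G H" "g \<in> G" "c \<in> H - G"
  shows "(e g c, e c g) = sig P e G H"
proof -
  have ex1: "\<exists>x. x \<in> G - H" and ex2: "\<exists>c. c \<in> H - G" using assms(1) unfolding ovl_def by auto
  have a: "(SOME x. x \<in> G - H) \<in> G - H" using someI_ex[OF ex1] .
  have b: "(SOME c. c \<in> H - G) \<in> H - G" using someI_ex[OF ex2] .
  show ?thesis unfolding sig_def using sig_core[OF assms(1) a _ assms(2,3)] b by auto
qed

lemma sig_swap: assumes "ovl P e G H" shows "sig P e H G = prod.swap (sig P e G H)"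
proof -
  obtain x c where x: "x \<in> G - H" and c: "c \<in> H - G" using assms unfolding ovl_def by auto
  have "sig P e G H = (e x c, e c x)" using sig1[OF assms x] c by auto
  moreover have "sig P e H G = (e c x, e x c)" using sig1[OF ovl_sym[OF assms] c] x by auto
  ultimately show ?thesis by simp
qed

lemma sig_chain: assumes GH: "ovl P e G H" and HK: "ovl P e H K"
  shows "sig P e H K \<in> {sig P e G H, prod.swap (sig P e G H)}"
proof -
  have G: "is_module P e G" and H: "is_module P e H" and K: "is_module P e K"
    using GH HK unfolding ovl_def by auto
  obtain g where g: "g \<in> G - H" using GH unfolding ovl_def by auto
  obtain k where k: "k \<in> K - H" using HK unfolding ovl_def by auto
  obtain w where w: "w \<in> H \<inter> K" using HK unfolding ovl_def by auto
  obtain w' where w': "w' \<in> G \<inter> H" using GH unfolding ovl_def by auto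
  have gP: "g \<in> P" and kP: "k \<in> P" using g k mod_sub[OF G] mod_sub[OF K] by auto
  show ?thesis
  proof (cases "g \<in> K")
    case True
    have a: "sig P e G H = (e g w, e w g)" using sig1[OF GH g] w by auto
    have b: "sig P e H K = (e w g, e g w)" using sig2[OF HK _ ] w g True by auto
    show ?thesis by (simp add: a b)
  next
    case gK: False
    show ?thesis
    proof (cases "k \<in> G")
      case True
      have a: "sig P e G H = (e k w', e w' k)" using sig1[OF GH] w' k True by auto
      have b: "sig P e H K = (e w' k, e k w')" using sig2[OF HK _ ] w' k by auto
      show ?thesis by (simp add: a b)
    next
      case kG: False
      have 1: "e g k = e g w \<and> e k g = e w g" using modD[OF K gP gK, of k w] k w by simp
      have 2: "e k g = e k w' \<and> e g k = e w' k" using modD[OF G kP kG, of g w'] g w' by simp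
      have a: "sig P e G H = (e g w, e w g)" using sig1[OF GH g] w by auto
      have b: "sig P e H K = (e w' k, e k w')" using sig2[OF HK _ ] w' k by auto
      have c1: "e w' k = e g w" using 1 2 by metis
      have c2: "e k w' = e w g" using 1 2 by metis
      show ?thesis by (simp add: a b c1 c2)
    qed
  qed
qed




locale tri =
  fixes P :: "'b set" and e :: "'b \<Rightarrow> 'b \<Rightarrow> 'w"
  assumes H1: "\<And>S a b. strong_module P e S \<Longrightarrow> a \<in> S \<Longrightarrow> b \<in> S \<Longrightarrow> a \<noteq> b \<Longrightarrow> S = P"
  and H2: "\<exists>M. ntm P e M"
begin

abbreviation reach where "reach \<equiv> (ovl P e)\<^sup>*\<^sup>*"

lemma reach_sym: "reach G H \<Longrightarrow> reach H G"
proof (induction rule: rtranclp_induct)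
  case base then show ?case by simp
next
  case (step y z)
  show ?case using converse_rtranclp_into_rtranclp[OF ovl_sym[OF step(2)] step(3)] .
qed

lemma reach_ntm: assumes "ntm P e M" and "reach M G" shows "ntm P e G"
  using assms(2)
proof (induction rule: rtranclp_induct)
  case base then show ?case using assms(1) by simp
next
  case (step y z) then show ?case using ovl_ntm by blast
qed

lemma ntm_mod: "ntm P e M \<Longrightarrow> is_module P e M" unfolding ntm_def by blast

lemma ntm_two: "ntm P e M \<Longrightarrow> \<exists>a\<in>M. \<exists>b\<in>M. a \<noteq> b" unfolding ntm_def by blast

lemma ntm_neq: "ntm P e M \<Longrightarrow> M \<noteq> P" unfolding ntm_def by blast

lemma not_strong_ntm: assumes "ntm P e M" shows "\<not> strong_module P e M"
proof
  assume s: "strong_module P e M"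
  obtain a b where ab: "a \<in> M" "b \<in> M" "a \<noteq> b" using ntm_two[OF assms] by blast
  have "M = P" using H1[OF s ab] .
  then show False using ntm_neq[OF assms] by blast
qed

lemma ntm_ovl: assumes "ntm P e M" shows "\<exists>K. ovl P e M K"
  using not_strong_ov[OF ntm_mod[OF assms] not_strong_ntm[OF assms]] .

lemma cover_mod: assumes M: "ntm P e M" shows "is_module P e (\<Union>{G. reach M G})"
proof -
  define U where "U = \<Union>{G. reach M G}"
  obtain m0 where m0: "m0 \<in> M" using ntm_two[OF M] by blast
  have key: "reach M G \<Longrightarrow> z \<in> P \<Longrightarrow> z \<notin> U \<Longrightarrow> g \<in> G \<Longrightarrow> (e z g, e g z) = (e z m0, e m0 z)" for G z g
  proof (induction arbitrary: g rule: rtranclp_induct)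
    case base
    have zM: "z \<notin> M" using base(2) unfolding U_def by blast
    show ?case using modD[OF ntm_mod[OF M] base(1) zM base(3) m0] by simp
  next
    case (step G H)
    obtain w where w: "w \<in> G" "w \<in> H" using step(2) unfolding ovl_def by blast
    have Hm: "is_module P e H" using step(2) unfolding ovl_def by blast
    have rH: "reach M H" using rtranclp.rtrancl_into_rtrancl[OF step(1,2)] .
    have zH: "z \<notin> H" using step(5) rH unfolding U_def by blast
    have 1: "e z g = e z w \<and> e g z = e w z" using modD[OF Hm step(4) zH step(6) w(2)] .
    have 2: "(e z w, e w z) = (e z m0, e m0 z)" using step(3)[OF step(4,5) w(1)] .
    show ?case using 1 2 by simp
  qed
  have sub: "U \<subseteq> P"
  proof
    fix u assume "u \<in> U"
    then obtain G where G: "reach M G" "u \<in> G" unfolding U_def by blast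
    show "u \<in> P" using mod_sub[OF ntm_mod[OF reach_ntm[OF M G(1)]]] G(2) by blast
  qed
  have "is_module P e U"
  proof (rule modI[OF sub])
    fix z y y' assume z: "z \<in> P" "z \<notin> U" and y: "y \<in> U" and y': "y' \<in> U"
    obtain G where G: "reach M G" "y \<in> G" using y unfolding U_def by blast
    obtain G' where G': "reach M G'" "y' \<in> G'" using y' unfolding U_def by blast
    have 1: "(e z y, e y z) = (e z m0, e m0 z)" using key[OF G(1) z G(2)] .
    have 2: "(e z y', e y' z) = (e z m0, e m0 z)" using key[OF G'(1) z G'(2)] .
    show "e z y = e z y' \<and> e y z = e y' z" using 1 2 by simp
  qed
  then show ?thesis unfolding U_def .
qed

lemma cover_strong: assumes M: "ntm P e M" shows "strong_module P e (\<Union>{G. reach M G})"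
proof -
  define U where "U = \<Union>{G. reach M G}"
  have Um: "is_module P e U" using cover_mod[OF M] unfolding U_def .
  have "U \<subseteq> K \<or> K \<subseteq> U \<or> U \<inter> K = {}" if K: "is_module P e K" for K
  proof (rule ccontr)
    assume nc: "\<not> (U \<subseteq> K \<or> K \<subseteq> U \<or> U \<inter> K = {})"
    have c1: "G \<subseteq> K" if G: "reach M G" "G \<inter> K \<noteq> {}" for G
    proof (rule ccontr)
      assume nGK: "\<not> G \<subseteq> K"
      have Gm: "is_module P e G" using ntm_mod[OF reach_ntm[OF M G(1)]] .
      have GU: "G \<subseteq> U" using G(1) unfolding U_def by blast
      have nKG: "\<not> K \<subseteq> G" using nc GU by blast
      have "ovl P e G K" unfolding ovl_def using Gm K G(2) nGK nKG by blast
      then have "reach M K" using rtranclp.rtrancl_into_rtrancl[OF G(1)] by blast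
      then have "K \<subseteq> U" unfolding U_def by blast
      then show False using nc by blast
    qed
    obtain u where u: "u \<in> U" "u \<in> K" using nc by blast
    obtain G0 where G0: "reach M G0" "u \<in> G0" using u(1) unfolding U_def by blast
    have G0K: "G0 \<subseteq> K" using c1[OF G0(1)] G0(2) u(2) by blast
    have c2: "reach G0 G \<Longrightarrow> G \<subseteq> K" for G
    proof (induction rule: rtranclp_induct)
      case base then show ?case using G0K .
    next
      case (step G H)
      have rH: "reach M H" using rtranclp_trans[OF G0(1) rtranclp.rtrancl_into_rtrancl[OF step(1,2)]] .
      have "H \<inter> K \<noteq> {}" using step(2,3) unfolding ovl_def by blast
      then show ?case using c1[OF rH] by blast
    qed
    have "U \<subseteq> K"
    proof
      fix v assume "v \<in> U"
      then obtain G where G: "reach M G" "v \<in> G" unfolding U_def by blast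
      have "reach G0 G" using rtranclp_trans[OF reach_sym[OF G0(1)] G(1)] .
      then show "v \<in> K" using c2 G(2) by blast
    qed
    then show False using nc by blast
  qed
  then show ?thesis unfolding strong_module_def U_def using Um unfolding U_def by blast
qed

lemma cover: assumes M: "ntm P e M" shows "\<Union>{G. reach M G} = P"
proof -
  obtain a b where ab: "a \<in> M" "b \<in> M" "a \<noteq> b" using ntm_two[OF M] by blast
  have "a \<in> \<Union>{G. reach M G}" "b \<in> \<Union>{G. reach M G}" using ab by blast+
  then show ?thesis using H1[OF cover_strong[OF M] _ _ ab(3)] by blast
qed

lemma lemA: assumes M: "ntm P e M" and N: "ntm P e N" and nr: "\<not> reach M N"
  and G: "reach M G" and GN: "G \<inter> N \<noteq> {}" shows "N \<subseteq> G"
proof (rule ccontr)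
  assume nNG: "\<not> N \<subseteq> G"
  have Gm: "is_module P e G" using ntm_mod[OF reach_ntm[OF M G]] .
  have GsN: "G \<subseteq> N"
  proof (rule ccontr)
    assume "\<not> G \<subseteq> N"
    then have "ovl P e G N" unfolding ovl_def using Gm ntm_mod[OF N] GN nNG by blast
    then have "reach M N" using rtranclp.rtrancl_into_rtrancl[OF G] by blast
    then show False using nr by blast
  qed
  have c2: "reach G H \<Longrightarrow> H \<subseteq> N" for H
  proof (induction rule: rtranclp_induct)
    case base then show ?case using GsN .
  next
    case (step H H2)
    have rH2: "reach M H2" using rtranclp_trans[OF G rtranclp.rtrancl_into_rtrancl[OF step(1,2)]] .
    have H2m: "is_module P e H2" using step(2) unfolding ovl_def by blast
    have meet: "H2 \<inter> N \<noteq> {}" using step(2,3) unfolding ovl_def by blast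
    show ?case
    proof (rule ccontr)
      assume n1: "\<not> H2 \<subseteq> N"
      have n2: "\<not> N \<subseteq> H2"
      proof
        assume "N \<subseteq> H2"
        then have "H \<subseteq> H2" using step(3) by blast
        then show False using step(2) unfolding ovl_def by blast
      qed
      have "ovl P e H2 N" unfolding ovl_def using H2m ntm_mod[OF N] meet n1 n2 by blast
      then have "reach M N" using rtranclp.rtrancl_into_rtrancl[OF rH2] by blast
      then show False using nr by blast
    qed
  qed
  have "P \<subseteq> N"
  proof
    fix v assume "v \<in> P"
    then have "v \<in> \<Union>{G. reach M G}" using cover[OF M] by blast
    then obtain H where H: "reach M H" "v \<in> H" by blast
    have "reach G H" using rtranclp_trans[OF reach_sym[OF G] H(1)] .
    then show "v \<in> N" using c2 H(2) by blast
  qed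
  then show False using ntm_neq[OF N] mod_sub[OF ntm_mod[OF N]] by blast
qed

lemma all_reach: assumes M: "ntm P e M" and N: "ntm P e N" shows "reach M N"
proof (rule ccontr)
  assume nr: "\<not> reach M N"
  obtain n where n: "n \<in> N" using ntm_two[OF N] by blast
  have "n \<in> P" using n mod_sub[OF ntm_mod[OF N]] by blast
  then have "n \<in> \<Union>{G. reach M G}" using cover[OF M] by blast
  then obtain G where G: "reach M G" "n \<in> G" by blast
  have NG: "N \<subseteq> G" using lemA[OF M N nr G(1)] n G(2) by blast
  have Gn: "ntm P e G" using reach_ntm[OF M G(1)] .
  have nr2: "\<not> reach N G"
  proof
    assume "reach N G"
    then have "reach M N" using rtranclp_trans[OF G(1) reach_sym] by blast
    then show False using nr by blast
  qed
  have GN: "G \<subseteq> N" using lemA[OF N Gn nr2 rtranclp.rtrancl_refl] n G(2) by blast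
  have "G = N" using NG GN by blast
  then show False using nr G(1) by blast
qed

lemma sig_global: "\<exists>\<sigma>. \<forall>G K. ovl P e G K \<longrightarrow> sig P e G K \<in> {\<sigma>, prod.swap \<sigma>}"
proof -
  obtain M0 where M0: "ntm P e M0" using H2 by blast
  obtain H0 where H0: "ovl P e M0 H0" using ntm_ovl[OF M0] by blast
  define \<sigma> where "\<sigma> = sig P e M0 H0"
  have claim: "reach M0 G \<Longrightarrow> (\<forall>K. ovl P e G K \<longrightarrow> sig P e G K \<in> {\<sigma>, prod.swap \<sigma>})" for G
  proof (induction rule: rtranclp_induct)
    case base
    show ?case
    proof (intro allI impI)
      fix K assume K: "ovl P e M0 K"
      have "sig P e M0 K \<in> {sig P e H0 M0, prod.swap (sig P e H0 M0)}"
        using sig_chain[OF ovl_sym[OF H0] K] .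
      moreover have "sig P e H0 M0 = prod.swap \<sigma>" using sig_swap[OF H0] unfolding \<sigma>_def .
      ultimately show "sig P e M0 K \<in> {\<sigma>, prod.swap \<sigma>}" by auto
    qed
  next
    case (step G G2)
    show ?case
    proof (intro allI impI)
      fix K assume K: "ovl P e G2 K"
      have 1: "sig P e G2 K \<in> {sig P e G G2, prod.swap (sig P e G G2)}" using sig_chain[OF step(2) K] .
      have 2: "sig P e G G2 \<in> {\<sigma>, prod.swap \<sigma>}" using step(3) step(2) by blast
      show "sig P e G2 K \<in> {\<sigma>, prod.swap \<sigma>}" using 1 2 by auto
    qed
  qed
  have "\<forall>G K. ovl P e G K \<longrightarrow> sig P e G K \<in> {\<sigma>, prod.swap \<sigma>}"
  proof (intro allI impI)
    fix G K assume GK: "ovl P e G K"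
    have "ntm P e G" using ovl_ntm[OF ovl_sym[OF GK]] .
    then have "reach M0 G" using all_reach[OF M0] by blast
    then show "sig P e G K \<in> {\<sigma>, prod.swap \<sigma>}" using claim GK by blast
  qed
  then show ?thesis by blast
qed

end



context tri begin

lemma sep: assumes x: "x \<in> P" and y: "y \<in> P" and xy: "x \<noteq> y"
  shows "\<exists>N. ntm P e N \<and> ((x \<in> N \<and> y \<notin> N) \<or> (y \<in> N \<and> x \<notin> N))"
proof (rule ccontr)
  assume "\<not> ?thesis"
  then have A: "\<And>N. ntm P e N \<Longrightarrow> x \<in> N \<longleftrightarrow> y \<in> N" by blast
  define F where "F = {N. ntm P e N \<and> x \<in> N}"
  obtain M0 where M0: "ntm P e M0" using H2 by blast
  have "x \<in> \<Union>{G. reach M0 G}" using cover[OF M0] x by blast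
  then obtain G0 where G0: "reach M0 G0" "x \<in> G0" by blast
  have G0F: "G0 \<in> F" unfolding F_def using reach_ntm[OF M0 G0(1)] G0(2) by blast
  define I where "I = \<Inter>F"
  have Im: "is_module P e I" unfolding I_def using mod_Inter[of F P e] G0F ntm_mod unfolding F_def by blast
  have xI: "x \<in> I" unfolding I_def F_def by blast
  have yI: "y \<in> I" unfolding I_def F_def using A by blast
  have IG0: "I \<subseteq> G0" unfolding I_def using G0F by blast
  have G0P: "G0 \<subseteq> P" "G0 \<noteq> P" using mod_sub[OF ntm_mod[OF reach_ntm[OF M0 G0(1)]]] ntm_neq[OF reach_ntm[OF M0 G0(1)]] by auto
  have InP: "I \<noteq> P" using IG0 G0P by blast
  have IP: "I \<subseteq> P" using IG0 G0P by blast
  have "strong_module P e I"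
    unfolding strong_module_def
  proof (intro conjI allI impI Im)
    fix K assume K: "is_module P e K"
    show "I \<subseteq> K \<or> K \<subseteq> I \<or> I \<inter> K = {}"
    proof (rule ccontr)
      assume nc: "\<not> (I \<subseteq> K \<or> K \<subseteq> I \<or> I \<inter> K = {})"
      obtain u v where uv: "u \<in> I" "u \<in> K" "v \<in> K" "v \<notin> I" using nc by blast
      have uvne: "u \<noteq> v" using uv by blast
      show False
      proof (cases "x \<in> K \<or> y \<in> K")
        case True
        have KnP: "K \<noteq> P" using nc IP by blast
        have Kn: "ntm P e K" unfolding ntm_def using K KnP uv(2,3) uvne by blast
        have "x \<in> K" using True A[OF Kn] by blast
        then have "K \<in> F" unfolding F_def using Kn by blast
        then have "I \<subseteq> K" unfolding I_def by blast
        then show False using nc by blast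
      next
        case False
        have D: "is_module P e (I - K)" using mod_Diff[OF Im K] nc by blast
        have xD: "x \<in> I - K" "y \<in> I - K" using xI yI False by blast+
        have DnP: "I - K \<noteq> P" using InP IP by blast
        have Dn: "ntm P e (I - K)" unfolding ntm_def using D xD xy DnP by blast
        then have "I - K \<in> F" unfolding F_def using xD by blast
        then have "I \<subseteq> I - K" unfolding I_def by blast
        then show False using nc by blast
      qed
    qed
  qed
  then have "I = P" using H1 xI yI xy by blast
  then show False using InP by blast
qed

lemma sepL: assumes x: "x \<in> P" and y: "y \<in> P" and xy: "x \<noteq> y" and N: "ntm P e N"
  and xN: "x \<in> N" and yN: "y \<notin> N"
  shows "\<exists>L K. ovl P e L K \<and> x \<in> L \<and> y \<in> K \<and> y \<notin> L"
proof -
  define L where "L = \<Union>{G. is_module P e G \<and> x \<in> G \<and> y \<notin> G}"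
  have Lm: "is_module P e L" unfolding L_def by (rule mod_Union_pt[where c=x]) blast
  have NL: "N \<subseteq> L" unfolding L_def using ntm_mod[OF N] xN yN by blast
  have xL: "x \<in> L" using NL xN by blast
  have yL: "y \<notin> L" unfolding L_def by blast
  have Ln: "ntm P e L" unfolding ntm_def using Lm NL ntm_two[OF N] yL y by blast
  obtain K where K: "ovl P e L K" using ntm_ovl[OF Ln] by blast
  have yK: "y \<in> K"
  proof (rule ccontr)
    assume yK: "y \<notin> K"
    have Km: "is_module P e K" using K unfolding ovl_def by blast
    obtain c where c: "c \<in> L" "c \<in> K" using K unfolding ovl_def by blast
    have "is_module P e (L \<union> K)" using mod_Un[OF Lm Km c] .
    then have mem: "L \<union> K \<in> {G. is_module P e G \<and> x \<in> G \<and> y \<notin> G}" using xL yL yK by blast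
    have "L \<union> K \<subseteq> L" using mem unfolding L_def by (rule Union_upper)
    then show False using K unfolding ovl_def by blast
  qed
  show ?thesis using K xL yK yL by blast
qed

lemma K0: "\<exists>\<sigma>. \<forall>x\<in>P. \<forall>y\<in>P. x \<noteq> y \<longrightarrow> (e x y, e y x) \<in> {\<sigma>, prod.swap \<sigma>}"
proof -
  obtain \<sigma> where sg: "\<And>G K. ovl P e G K \<Longrightarrow> sig P e G K \<in> {\<sigma>, prod.swap \<sigma>}" using sig_global by blast
  have "(e x y, e y x) \<in> {\<sigma>, prod.swap \<sigma>}" if x: "x \<in> P" and y: "y \<in> P" and xy: "x \<noteq> y" for x y
  proof -
    obtain N where N: "ntm P e N" "(x \<in> N \<and> y \<notin> N) \<or> (y \<in> N \<and> x \<notin> N)" using sep[OF x y xy] by blast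
    show ?thesis
    proof (cases "x \<in> N \<and> y \<notin> N")
      case True
      obtain L K where LK: "ovl P e L K" "x \<in> L" "y \<in> K" "y \<notin> L" using sepL[OF x y xy N(1)] True by blast
      have "(e x y, e y x) = sig P e L K" using sig2[OF LK(1) LK(2)] LK(3,4) by blast
      then show ?thesis using sg[OF LK(1)] by simp
    next
      case False
      then have yx: "y \<in> N" "x \<notin> N" using N(2) by blast+
      obtain L K where LK: "ovl P e L K" "y \<in> L" "x \<in> K" "x \<notin> L" using sepL[OF y x _ N(1) yx] xy by blast
      have "(e y x, e x y) = sig P e L K" using sig2[OF LK(1) LK(2)] LK(3,4) by blast
      then have "(e x y, e y x) = prod.swap (sig P e L K)" by (metis swap_simp)
      then show ?thesis using sg[OF LK(1)] by auto
    qed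
  qed
  then show ?thesis by blast
qed

lemma no3cycle: assumes x: "x \<in> P" and y: "y \<in> P" and z: "z \<in> P"
  and ab: "a \<noteq> b"
  and p1: "(e x y, e y x) = (a, b)" and p2: "(e y z, e z y) = (a, b)" and p3: "(e z x, e x z) = (a, b)"
  shows False
proof -
  have xy: "x \<noteq> y" and yz: "y \<noteq> z" and xz: "x \<noteq> z"
    using p1 p2 p3 ab by auto
  have cxy: False if M: "is_module P e M" "x \<in> M" "y \<in> M" "z \<notin> M" for M
    using modD[OF M(1) z M(4) M(2) M(3)] p1 p2 p3 ab by auto
  have cyz: False if M: "is_module P e M" "y \<in> M" "z \<in> M" "x \<notin> M" for M
    using modD[OF M(1) x M(4) M(2) M(3)] p1 p2 p3 ab by auto
  have cxz: False if M: "is_module P e M" "x \<in> M" "z \<in> M" "y \<notin> M" for M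
    using modD[OF M(1) y M(4) M(2) M(3)] p1 p2 p3 ab by auto
  obtain N where N: "ntm P e N" "(x \<in> N \<and> y \<notin> N) \<or> (y \<in> N \<and> x \<notin> N)" using sep[OF x y xy] by blast
  show False
  proof (cases "x \<in> N \<and> y \<notin> N")
    case True
    obtain L K where LK: "ovl P e L K" "x \<in> L" "y \<in> K" "y \<notin> L" using sepL[OF x y xy N(1)] True by blast
    have Lm: "is_module P e L" and Km: "is_module P e K" using LK(1) unfolding ovl_def by blast+
    obtain c where c: "c \<in> L" "c \<in> K" using LK(1) unfolding ovl_def by blast
    have zL: "z \<notin> L" using cxz[OF Lm LK(2) _ LK(4)] by blast
    have zK: "z \<in> K" using cxy[OF mod_Un[OF Lm Km c]] LK(2,3) zL by blast
    have D: "is_module P e (K - L)" using mod_Diff[OF Km Lm] LK(1) unfolding ovl_def by blast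
    show False using cyz[OF D] LK zK zL by blast
  next
    case False
    then have yx: "y \<in> N" "x \<notin> N" using N(2) by blast+
    obtain L K where LK: "ovl P e L K" "y \<in> L" "x \<in> K" "x \<notin> L" using sepL[OF y x _ N(1) yx] xy by blast
    have Lm: "is_module P e L" and Km: "is_module P e K" using LK(1) unfolding ovl_def by blast+
    obtain c where c: "c \<in> L" "c \<in> K" using LK(1) unfolding ovl_def by blast
    have zL: "z \<notin> L" using cyz[OF Lm LK(2) _ LK(4)] by blast
    have zK: "z \<in> K" using cxy[OF mod_Un[OF Lm Km c]] LK(2,3) zL by blast
    have D: "is_module P e (K - L)" using mod_Diff[OF Km Lm] LK(1) unfolding ovl_def by blast
    show False using cxz[OF D] LK zK zL by blast
  qed
qed

lemma TL: assumes x: "x \<in> P" and y: "y \<in> P" and z: "z \<in> P"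
  and xy: "x \<noteq> y" and yz: "y \<noteq> z" and xz: "x \<noteq> z"
  shows "(e x y, e y x) = (e x z, e z x) \<or> (e x y, e y x) = (e z y, e y z)"
proof (rule ccontr)
  assume nc: "\<not> ?thesis"
  obtain \<sigma> where sg: "\<forall>x\<in>P. \<forall>y\<in>P. x \<noteq> y \<longrightarrow> (e x y, e y x) \<in> {\<sigma>, prod.swap \<sigma>}" using K0 by blast
  obtain a b where ab: "\<sigma> = (a, b)" by (cases \<sigma>)
  have q1: "(e x y, e y x) \<in> {(a,b), (b,a)}" using sg x y xy ab by auto
  have q2: "(e x z, e z x) \<in> {(a,b), (b,a)}" using sg x z xz ab by auto
  have q3: "(e z y, e y z) \<in> {(a,b), (b,a)}" using sg z y yz ab by auto
  show False
  proof (cases "a = b")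
    case True then show False using q1 q2 nc by auto
  next
    case False
    show False
    proof (cases "(e x y, e y x) = (a, b)")
      case True
      have 2: "(e z x, e x z) = (a, b)" using q2 True nc by auto
      have 3: "(e y z, e z y) = (a, b)" using q3 True nc by auto
      show False using no3cycle[OF x y z False True 3 2] .
    next
      case c1: False
      have 1: "(e y x, e x y) = (a, b)" using q1 c1 by auto
      have 2: "(e x z, e z x) = (a, b)" using q2 q1 c1 nc by auto
      have 3: "(e z y, e y z) = (a, b)" using q3 q1 c1 nc by auto
      show False using no3cycle[OF y x z False 1 2 3] .
    qed
  qed
qed

end



lemma strong_mod: "strong_module V d A \<Longrightarrow> is_module V d A"
  unfolding strong_module_def by blast

lemma strongD: "strong_module V d A \<Longrightarrow> is_module V d B \<Longrightarrow> A \<subseteq> B \<or> B \<subseteq> A \<or> A \<inter> B = {}"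
  unfolding strong_module_def by blast

lemma V_strong: "strong_module V d V"
  unfolding strong_module_def is_module_def by blast

lemma single_strong: assumes "x \<in> V" shows "strong_module V d {x}"
proof -
  have "is_module V d {x}" by (rule modI) (use assms in auto)
  then show ?thesis unfolding strong_module_def by blast
qed

lemma Smod_sup: "X \<subseteq> S_mod V d X"
  unfolding S_mod_def by blast

lemma Smod_least: "strong_module V d B \<Longrightarrow> X \<subseteq> B \<Longrightarrow> S_mod V d X \<subseteq> B"
  unfolding S_mod_def by blast

lemma Smod_strong: assumes X: "X \<subseteq> V" shows "strong_module V d (S_mod V d X)"
proof -
  define F where "F = {A. strong_module V d A \<and> X \<subseteq> A}"
  have VF: "V \<in> F" unfolding F_def using V_strong X by blast
  have S: "S_mod V d X = \<Inter>F" unfolding S_mod_def F_def by simp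
  have Sm: "is_module V d (\<Inter>F)" using mod_Inter[of F V d] VF unfolding F_def using strong_mod by blast
  have "\<Inter>F \<subseteq> B \<or> B \<subseteq> \<Inter>F \<or> \<Inter>F \<inter> B = {}" if B: "is_module V d B" for B
  proof (cases "\<exists>A\<in>F. A \<subseteq> B")
    case True then show ?thesis by blast
  next
    case False
    show ?thesis
    proof (cases "\<Inter>F \<inter> B = {}")
      case True then show ?thesis by blast
    next
      case ne: False
      have "B \<subseteq> A" if A: "A \<in> F" for A
      proof -
        have "A \<subseteq> B \<or> B \<subseteq> A \<or> A \<inter> B = {}" using strongD[OF _ B] A unfolding F_def by blast
        moreover have "A \<inter> B \<noteq> {}" using ne A by blast
        ultimately show ?thesis using False A by blast
      qed
      then show ?thesis by blast
    qed
  qed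
  then show ?thesis unfolding S strong_module_def using Sm by blast
qed

lemma robust_two: assumes R: "robust V d C" and xy: "x \<in> C" "y \<in> C" "x \<noteq> y"
  shows "\<exists>a b. a \<in> V \<and> b \<in> V \<and> a \<noteq> b \<and> C = S_mod V d {a, b}"
proof -
  have disj: "(\<exists>z\<in>V. C = {z}) \<or> (\<exists>a\<in>V. \<exists>b\<in>V. a \<noteq> b \<and> C = S_mod V d {a, b})"
    using R unfolding robust_def by (rule conjunct2)
  have ns: "\<not> (\<exists>z\<in>V. C = {z})"
  proof
    assume "\<exists>z\<in>V. C = {z}"
    then obtain z where z: "C = {z}" by blast
    have "x = z" "y = z" using xy(1,2) unfolding z by simp_all
    then show False using xy(3) by simp
  qed
  show ?thesis using disj ns by blast
qed

lemma robust_strong: assumes "robust V d C" shows "strong_module V d C"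
proof -
  have "(\<exists>x\<in>V. C = {x}) \<or> (\<exists>x\<in>V. \<exists>y\<in>V. x \<noteq> y \<and> C = S_mod V d {x, y})" using assms unfolding robust_def by (rule conjunct2)
  then show ?thesis
  proof
    assume "\<exists>x\<in>V. C = {x}"
    then obtain x where x: "x \<in> V" "C = {x}" by blast
    show ?thesis unfolding x(2) using single_strong[OF x(1)] .
  next
    assume "\<exists>x\<in>V. \<exists>y\<in>V. x \<noteq> y \<and> C = S_mod V d {x, y}"
    then obtain x y where xy: "x \<in> V" "y \<in> V" "C = S_mod V d {x, y}" by blast
    have "{x,y} \<subseteq> V" using xy by blast
    then show ?thesis unfolding xy(3) by (rule Smod_strong)
  qed
qed

lemma cr_mem: "comp_rel V d C x y \<Longrightarrow> x \<in> C \<and> y \<in> C"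
  unfolding comp_rel_def by blast

lemma cr_refl: "x \<in> C \<Longrightarrow> comp_rel V d C x x"
  unfolding comp_rel_def by blast

lemma cr_sym: "comp_rel V d C x y \<Longrightarrow> comp_rel V d C y x"
  unfolding comp_rel_def by blast

lemma cr_strong: "strong_module V d B \<Longrightarrow> B \<subset> C \<Longrightarrow> x \<in> B \<Longrightarrow> y \<in> B \<Longrightarrow> comp_rel V d C x y"
  unfolding comp_rel_def by blast

lemma cr_trans: assumes xy: "comp_rel V d C x y" and yz: "comp_rel V d C y z" shows "comp_rel V d C x z"
proof (cases "x = y \<or> y = z")
  case True then show ?thesis using xy yz by blast
next
  case False
  obtain B1 where B1: "strong_module V d B1" "x \<in> B1" "y \<in> B1" "B1 \<subset> C" using xy False unfolding comp_rel_def by blast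
  obtain B2 where B2: "strong_module V d B2" "y \<in> B2" "z \<in> B2" "B2 \<subset> C" using yz False unfolding comp_rel_def by blast
  have "B1 \<subseteq> B2 \<or> B2 \<subseteq> B1 \<or> B1 \<inter> B2 = {}" using strongD[OF B1(1) strong_mod[OF B2(1)]] .
  then have "B1 \<subseteq> B2 \<or> B2 \<subseteq> B1" using B1(3) B2(2) by blast
  then show ?thesis
  proof
    assume "B1 \<subseteq> B2" then show ?thesis using cr_strong[OF B2(1) B2(4)] B1(2) B2(3) by blast
  next
    assume "B2 \<subseteq> B1" then show ?thesis using cr_strong[OF B1(1) B1(4)] B1(2) B2(3) by blast
  qed
qed

definition cmp :: "'a set \<Rightarrow> ('a \<Rightarrow> 'a \<Rightarrow> 'w) \<Rightarrow> 'a set \<Rightarrow> 'a \<Rightarrow> 'a set" where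
  "cmp V d C x = {y \<in> C. comp_rel V d C x y}"

lemma components_cmp: "components V d C = {cmp V d C x | x. x \<in> C}"
  unfolding components_def cmp_def by simp

lemma cmp_self: assumes "x \<in> C" shows "x \<in> cmp V d C x"
  unfolding cmp_def using cr_refl[OF assms, of V d] assms by simp

lemma cmp_sub: "cmp V d C x \<subseteq> C"
  unfolding cmp_def by blast

lemma cmp_iff: "y \<in> cmp V d C x \<longleftrightarrow> comp_rel V d C x y"
  unfolding cmp_def using cr_mem[of V d C x y] by blast

lemma cmp_cr: assumes "y \<in> cmp V d C x" "y' \<in> cmp V d C x" shows "comp_rel V d C y y'"
proof -
  have 1: "comp_rel V d C x y" and 2: "comp_rel V d C x y'" using assms unfolding cmp_iff by blast+
  show ?thesis using cr_trans[OF cr_sym[OF 1] 2] .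
qed

lemma cmp_cr2: assumes "y \<in> cmp V d C x" "comp_rel V d C y z" shows "z \<in> cmp V d C x"
proof -
  have 1: "comp_rel V d C x y" using assms unfolding cmp_iff by blast
  show ?thesis using cr_trans[OF 1 assms(2)] unfolding cmp_iff .
qed

lemma cmp_eq: assumes xy: "comp_rel V d C x y" shows "cmp V d C x = cmp V d C y"
proof (rule set_eqI)
  fix z
  have 1: "comp_rel V d C y z" if "comp_rel V d C x z" using cr_trans[OF cr_sym[OF xy] that] .
  have 2: "comp_rel V d C x z" if "comp_rel V d C y z" using cr_trans[OF xy that] .
  show "z \<in> cmp V d C x \<longleftrightarrow> z \<in> cmp V d C y" unfolding cmp_iff using 1 2 by blast
qed

lemma cmp_eq_iff: assumes "x \<in> C" "y \<in> C" shows "cmp V d C x = cmp V d C y \<longleftrightarrow> comp_rel V d C x y"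
proof
  assume "cmp V d C x = cmp V d C y"
  then have "y \<in> cmp V d C x" using cmp_self[OF assms(2)] by simp
  then show "comp_rel V d C x y" unfolding cmp_iff .
next
  assume "comp_rel V d C x y" then show "cmp V d C x = cmp V d C y" by (rule cmp_eq)
qed

lemma cmp_mod: assumes C: "is_module V d C" and x: "x \<in> C" shows "is_module V d (cmp V d C x)"
proof (rule modI)
  show "cmp V d C x \<subseteq> V" using cmp_sub[of V d C x] mod_sub[OF C] by blast
  fix w y y' assume w: "w \<in> V" "w \<notin> cmp V d C x" and y: "y \<in> cmp V d C x" and y': "y' \<in> cmp V d C x"
  show "d w y = d w y' \<and> d y w = d y' w"
  proof (cases "w \<in> C")
    case False
    have yC: "y \<in> C" "y' \<in> C" using y y' cmp_sub[of V d C x] by blast+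
    show ?thesis using modD[OF C w(1) False yC] .
  next
    case True
    have yy: "comp_rel V d C y y'" using cmp_cr[OF y y'] .
    show ?thesis
    proof (cases "y = y'")
      case True then show ?thesis by simp
    next
      case False
      have ex: "\<exists>B. strong_module V d B \<and> y \<in> B \<and> y' \<in> B \<and> B \<subset> C"
        using yy False unfolding comp_rel_def by simp
      obtain B where B: "strong_module V d B" "y \<in> B" "y' \<in> B" "B \<subset> C" using ex by blast
      have wB: "w \<notin> B"
      proof
        assume wB: "w \<in> B"
        have "comp_rel V d C y w" using cr_strong[OF B(1) B(4) B(2) wB] .
        then have "w \<in> cmp V d C x" using cmp_cr2[OF y] by simp
        then show False using w(2) by simp
      qed
      show ?thesis using modD[OF strong_mod[OF B(1)] w(1) wB B(2) B(3)] .
    qed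
  qed
qed

lemma cmp_strong: assumes C: "is_module V d C" and x: "x \<in> C" shows "strong_module V d (cmp V d C x)"
proof -
  have "cmp V d C x \<subseteq> N \<or> N \<subseteq> cmp V d C x \<or> cmp V d C x \<inter> N = {}" if N: "is_module V d N" for N
  proof (rule ccontr)
    assume nc: "\<not> ?thesis"
    obtain y where y: "y \<in> N" "y \<in> cmp V d C x" using nc by blast
    obtain u where u: "u \<in> cmp V d C x" "u \<notin> N" using nc by blast
    have yu: "comp_rel V d C y u" using cmp_cr[OF y(2) u(1)] .
    have ne: "y \<noteq> u" using y u by blast
    obtain B where B: "strong_module V d B" "y \<in> B" "u \<in> B" "B \<subset> C" using yu ne unfolding comp_rel_def by blast
    have "B \<subseteq> N \<or> N \<subseteq> B \<or> B \<inter> N = {}" using strongD[OF B(1) N] .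
    then have NB: "N \<subseteq> B" using y(1) B(2,3) u(2) by blast
    have "B \<subseteq> cmp V d C x"
    proof
      fix b assume "b \<in> B"
      then have "comp_rel V d C y b" using cr_strong[OF B(1) B(4) B(2)] by blast
      then show "b \<in> cmp V d C x" using cmp_cr2[OF y(2)] by blast
    qed
    then show False using NB nc by blast
  qed
  then show ?thesis unfolding strong_module_def using cmp_mod[OF C x] by blast
qed

lemma cr_not_ab: assumes ab: "a \<noteq> b" and C: "C = S_mod V d {a, b}" shows "\<not> comp_rel V d C a b"
proof
  assume "comp_rel V d C a b"
  then obtain B where B: "strong_module V d B" "a \<in> B" "b \<in> B" "B \<subset> C" using ab unfolding comp_rel_def by blast
  have "C \<subseteq> B" using Smod_least[OF B(1), of "{a,b}"] B(2,3) C by blast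
  then show False using B(4) by blast
qed

lemma cmp_proper: assumes ab: "a \<noteq> b" and C: "C = S_mod V d {a, b}" and x: "x \<in> C"
  shows "cmp V d C x \<noteq> C"
proof
  assume eq: "cmp V d C x = C"
  have "a \<in> C" "b \<in> C" using Smod_sup[of "{a,b}" V d] C by blast+
  then have "a \<in> cmp V d C x" "b \<in> cmp V d C x" using eq by blast+
  then have "comp_rel V d C a b" by (rule cmp_cr)
  then show False using cr_not_ab[OF ab C] by blast
qed

lemma comps_disj: assumes "I \<in> components V d C" "J \<in> components V d C" "I \<noteq> J" shows "I \<inter> J = {}"
proof -
  obtain x where x: "x \<in> C" "I = cmp V d C x" using assms(1) unfolding components_cmp by blast
  obtain y where y: "y \<in> C" "J = cmp V d C y" using assms(2) unfolding components_cmp by blast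
  show ?thesis
  proof (rule ccontr)
    assume "I \<inter> J \<noteq> {}"
    then obtain z where "z \<in> cmp V d C x" "z \<in> cmp V d C y" using x y by blast
    then have xz: "comp_rel V d C x z" and yz: "comp_rel V d C y z" unfolding cmp_iff by blast+
    have "comp_rel V d C x y" using cr_trans[OF xz cr_sym[OF yz]] .
    then show False using cmp_eq[of V d C x y] x y assms(3) by simp
  qed
qed

lemma comps_union: "\<Union>(components V d C) = C"
proof
  show "\<Union>(components V d C) \<subseteq> C"
  proof
    fix y assume "y \<in> \<Union>(components V d C)"
    then obtain x where "x \<in> C" "y \<in> cmp V d C x" unfolding components_cmp by blast
    then show "y \<in> C" using cmp_sub[of V d C x] by blast
  qed
  show "C \<subseteq> \<Union>(components V d C)"
  proof
    fix y assume y: "y \<in> C"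
    have "cmp V d C y \<in> components V d C" unfolding components_cmp using y by blast
    then show "y \<in> \<Union>(components V d C)" using cmp_self[OF y] by blast
  qed
qed

lemma comps_obt: assumes "I \<in> components V d C" obtains x where "x \<in> C" "I = cmp V d C x"
  using assms unfolding components_cmp by blast

lemma comps_ne: assumes "I \<in> components V d C" shows "I \<noteq> {}"
proof -
  obtain x where x: "x \<in> C" "I = cmp V d C x" by (rule comps_obt[OF assms])
  show ?thesis using cmp_self[OF x(1)] x(2) by blast
qed

lemma comps_sub: assumes "I \<in> components V d C" shows "I \<subseteq> C"
proof -
  obtain x where x: "x \<in> C" "I = cmp V d C x" by (rule comps_obt[OF assms])
  show ?thesis using cmp_sub[of V d C x] x(2) by simp
qed

lemma comps_mod: assumes C: "is_module V d C" and I: "I \<in> components V d C" shows "is_module V d I"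
proof -
  obtain x where x: "x \<in> C" "I = cmp V d C x" by (rule comps_obt[OF I])
  show ?thesis unfolding x(2) using cmp_mod[OF C x(1)] .
qed

lemma comps_strong: assumes C: "is_module V d C" and I: "I \<in> components V d C" shows "strong_module V d I"
proof -
  obtain x where x: "x \<in> C" "I = cmp V d C x" by (rule comps_obt[OF I])
  show ?thesis unfolding x(2) using cmp_strong[OF C x(1)] .
qed

lemma cmp_in: assumes "x \<in> C" shows "cmp V d C x \<in> components V d C"
  unfolding components_cmp using assms by blast

lemma dmod_eq: assumes I: "is_module V d I" and J: "is_module V d J" and dj: "I \<inter> J = {}"
  and u: "u \<in> I" and v: "v \<in> J" shows "d u v = dmod d I J"
proof -
  have exI: "\<exists>x. x \<in> I" and exJ: "\<exists>x. x \<in> J" using u v by blast+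
  define i where "i = (SOME x. x \<in> I)"
  define j where "j = (SOME x. x \<in> J)"
  have i: "i \<in> I" unfolding i_def using someI_ex[OF exI] .
  have j: "j \<in> J" unfolding j_def using someI_ex[OF exJ] .
  have vP: "v \<in> V" and iP: "i \<in> V" using v i mod_sub[OF I] mod_sub[OF J] by blast+
  have 1: "d v u = d v i \<and> d u v = d i v" using modD[OF I vP _ u i] v dj by blast
  have 2: "d i v = d i j \<and> d v i = d j i" using modD[OF J iP _ v j] i dj by blast
  have e: "dmod d I J = d i j" unfolding dmod_def i_def j_def by simp
  have "d u v = d i v" using 1 by (rule conjunct2)
  also have "\<dots> = d i j" using 2 by (rule conjunct1)
  finally show ?thesis using e by simp
qed




lemma comp_of: assumes I: "I \<in> components V d C" and x: "x \<in> I" shows "I = cmp V d C x"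
proof -
  obtain x0 where x0: "x0 \<in> C" "I = cmp V d C x0" by (rule comps_obt[OF I])
  have "x \<in> cmp V d C x0" using x x0(2) by simp
  then have "comp_rel V d C x0 x" unfolding cmp_iff .
  then show ?thesis using x0(2) cmp_eq[of V d C x0 x] by simp
qed

lemma dmod_comp: assumes C: "is_module V d C" and I: "I \<in> components V d C" and J: "J \<in> components V d C"
  and IJ: "I \<noteq> J" and u: "u \<in> I" and v: "v \<in> J" shows "d u v = dmod d I J"
  using dmod_eq[OF comps_mod[OF C I] comps_mod[OF C J] comps_disj[OF I J IJ] u v] .

lemma Q1: assumes C: "is_module V d C" and X: "X \<subseteq> components V d C"
  and M: "is_module (components V d C) (dmod d) X" shows "is_module V d (\<Union>X)"
proof (rule modI)
  have CV: "C \<subseteq> V" using mod_sub[OF C] .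
  show "\<Union>X \<subseteq> V"
  proof
    fix u assume "u \<in> \<Union>X"
    then obtain I where I: "I \<in> X" "u \<in> I" by blast
    have "I \<subseteq> C" using comps_sub[of I V d C] X I(1) by blast
    then show "u \<in> V" using I(2) CV by blast
  qed
  fix w u u' assume w: "w \<in> V" "w \<notin> \<Union>X" and u: "u \<in> \<Union>X" and u': "u' \<in> \<Union>X"
  obtain I where I: "I \<in> X" "u \<in> I" using u by blast
  obtain J where J: "J \<in> X" "u' \<in> J" using u' by blast
  have IP: "I \<in> components V d C" and JP: "J \<in> components V d C" using I(1) J(1) X by blast+
  have uC: "u \<in> C" using comps_sub[OF IP] I(2) by blast
  have u'C: "u' \<in> C" using comps_sub[OF JP] J(2) by blast
  show "d w u = d w u' \<and> d u w = d u' w"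
  proof (cases "w \<in> C")
    case False
    show ?thesis using modD[OF C w(1) False uC u'C] .
  next
    case True
    define K where "K = cmp V d C w"
    have KP: "K \<in> components V d C" unfolding K_def using cmp_in[OF True] .
    have wK: "w \<in> K" unfolding K_def using cmp_self[OF True] .
    have KX: "K \<notin> X" using wK w(2) by blast
    have KI: "K \<noteq> I" and KJ: "K \<noteq> J" using KX I(1) J(1) by blast+
    have 1: "d w u = dmod d K I" using dmod_comp[OF C KP IP KI wK I(2)] .
    have 2: "d u w = dmod d I K" using dmod_comp[OF C IP KP KI[symmetric] I(2) wK] .
    have 3: "d w u' = dmod d K J" using dmod_comp[OF C KP JP KJ wK J(2)] .
    have 4: "d u' w = dmod d J K" using dmod_comp[OF C JP KP KJ[symmetric] J(2) wK] .
    have 5: "dmod d K I = dmod d K J \<and> dmod d I K = dmod d J K" using modD[OF M KP KX I(1) J(1)] .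
    show ?thesis using 1 2 3 4 5 by simp
  qed
qed

lemma Q1': assumes C: "is_module V d C" and X: "X \<subseteq> components V d C"
  and M: "is_module V d (\<Union>X)" shows "is_module (components V d C) (dmod d) X"
proof (rule modI[OF X])
  fix K I J assume K: "K \<in> components V d C" "K \<notin> X" and I: "I \<in> X" and J: "J \<in> X"
  have IP: "I \<in> components V d C" and JP: "J \<in> components V d C" using I J X by blast+
  obtain k where k: "k \<in> K" using comps_ne[OF K(1)] by blast
  obtain i where i: "i \<in> I" using comps_ne[OF IP] by blast
  obtain j where j: "j \<in> J" using comps_ne[OF JP] by blast
  have KI: "K \<noteq> I" and KJ: "K \<noteq> J" using K(2) I J by blast+
  have kV: "k \<in> V" using k comps_sub[OF K(1)] mod_sub[OF C] by blast
  have kX: "k \<notin> \<Union>X"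
  proof
    assume "k \<in> \<Union>X"
    then obtain L where L: "L \<in> X" "k \<in> L" by blast
    have LP: "L \<in> components V d C" using L(1) X by blast
    have "K \<noteq> L" using L(1) K(2) by blast
    then have "K \<inter> L = {}" using comps_disj[OF K(1) LP] by blast
    then show False using k L(2) by blast
  qed
  have 0: "d k i = d k j \<and> d i k = d j k" using modD[OF M kV kX] i j I J by blast
  have 1: "d k i = dmod d K I" using dmod_comp[OF C K(1) IP KI k i] .
  have 2: "d i k = dmod d I K" using dmod_comp[OF C IP K(1) KI[symmetric] i k] .
  have 3: "d k j = dmod d K J" using dmod_comp[OF C K(1) JP KJ k j] .
  have 4: "d j k = dmod d J K" using dmod_comp[OF C JP K(1) KJ[symmetric] j k] .
  show "dmod d K I = dmod d K J \<and> dmod d I K = dmod d J K" using 0 1 2 3 4 by simp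
qed

lemma H1_transfer: assumes ab: "a \<noteq> b" "a \<in> V" "b \<in> V" and Cdef: "C = S_mod V d {a, b}"
  and S: "strong_module (components V d C) (dmod d) SS" and I: "I \<in> SS" and J: "J \<in> SS" and IJ: "I \<noteq> J"
  shows "SS = components V d C"
proof (rule ccontr)
  assume nP: "SS \<noteq> components V d C"
  have Cs: "strong_module V d C" unfolding Cdef by (rule Smod_strong) (use ab in blast)
  have C: "is_module V d C" using strong_mod[OF Cs] .
  have SSP: "SS \<subseteq> components V d C" using mod_sub[OF strong_mod[OF S]] .
  define U where "U = \<Union>SS"
  have Um: "is_module V d U" unfolding U_def using Q1[OF C SSP strong_mod[OF S]] .
  have UC: "U \<subseteq> C" unfolding U_def using SSP comps_union[of V d C] by blast
  have Ustrong: "strong_module V d U"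
    unfolding strong_module_def
  proof (intro conjI allI impI Um)
    fix N assume N: "is_module V d N"
    have "C \<subseteq> N \<or> N \<subseteq> C \<or> C \<inter> N = {}" using strongD[OF Cs N] .
    then show "U \<subseteq> N \<or> N \<subseteq> U \<or> U \<inter> N = {}"
    proof (elim disjE)
      assume "C \<subseteq> N" then show ?thesis using UC by blast
    next
      assume "C \<inter> N = {}" then show ?thesis using UC by blast
    next
      assume NC: "N \<subseteq> C"
      show ?thesis
      proof (cases "\<exists>K\<in>components V d C. N \<subseteq> K")
        case True
        then obtain K where K: "K \<in> components V d C" "N \<subseteq> K" by blast
        show ?thesis
        proof (cases "K \<in> SS")
          case True then show ?thesis using K unfolding U_def by blast
        next
          case False
          have "U \<inter> K = {}"
          proof -
            have "L \<inter> K = {}" if L: "L \<in> SS" for L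
              using comps_disj[of L V d C K] L SSP K(1) False by blast
            then show ?thesis unfolding U_def by blast
          qed
          then show ?thesis using K(2) by blast
        qed
      next
        case False
        define NN where "NN = {K \<in> components V d C. K \<inter> N \<noteq> {}}"
        have NNP: "NN \<subseteq> components V d C" unfolding NN_def by blast
        have sub1: "K \<subseteq> N" if K: "K \<in> NN" for K
        proof -
          have KP: "K \<in> components V d C" using K unfolding NN_def by blast
          have "K \<subseteq> N \<or> N \<subseteq> K \<or> K \<inter> N = {}" using strongD[OF comps_strong[OF C KP] N] .
          then show ?thesis using False KP K unfolding NN_def by blast
        qed
        have NU: "N = \<Union>NN"
        proof
          show "\<Union>NN \<subseteq> N" using sub1 by blast
          show "N \<subseteq> \<Union>NN"
          proof
            fix n assume n: "n \<in> N"
            then have "n \<in> C" using NC by blast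
            then obtain K where K: "K \<in> components V d C" "n \<in> K" using comps_union[of V d C] by blast
            then have "K \<in> NN" unfolding NN_def using n by blast
            then show "n \<in> \<Union>NN" using K(2) by blast
          qed
        qed
        have NNm: "is_module (components V d C) (dmod d) NN" using Q1'[OF C NNP] N NU by simp
        have "SS \<subseteq> NN \<or> NN \<subseteq> SS \<or> SS \<inter> NN = {}" using strongD[OF S NNm] .
        then show ?thesis
        proof (elim disjE)
          assume "SS \<subseteq> NN" then show ?thesis unfolding U_def NU by blast
        next
          assume "NN \<subseteq> SS" then show ?thesis unfolding U_def NU by blast
        next
          assume dis: "SS \<inter> NN = {}"
          have "U \<inter> N = {}"
          proof (rule ccontr)
            assume "U \<inter> N \<noteq> {}"
            then obtain u L where u: "u \<in> N" "L \<in> SS" "u \<in> L" unfolding U_def by blast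
            have "L \<in> NN" unfolding NN_def using u SSP by blast
            then show False using dis u(2) by blast
          qed
          then show ?thesis by blast
        qed
      qed
    qed
  qed
  obtain K where K: "K \<in> components V d C" "K \<notin> SS" using nP SSP by blast
  obtain k where k: "k \<in> K" using comps_ne[OF K(1)] by blast
  have kU: "k \<notin> U"
  proof
    assume "k \<in> U"
    then obtain L where L: "L \<in> SS" "k \<in> L" unfolding U_def by blast
    have "K \<noteq> L" using L(1) K(2) by blast
    then have "K \<inter> L = {}" using comps_disj[of K V d C L] K(1) L(1) SSP by blast
    then show False using k L(2) by blast
  qed
  have kC: "k \<in> C" using k comps_sub[OF K(1)] by blast
  have UsC: "U \<subset> C" using UC kU kC by blast
  have IP: "I \<in> components V d C" and JP: "J \<in> components V d C" using I J SSP by blast+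
  obtain x where x: "x \<in> I" using comps_ne[OF IP] by blast
  obtain y where y: "y \<in> J" using comps_ne[OF JP] by blast
  have xU: "x \<in> U" and yU: "y \<in> U" unfolding U_def using x y I J by blast+
  have cr: "comp_rel V d C x y" using cr_strong[OF Ustrong UsC xU yU] .
  have "I = cmp V d C x" using comp_of[OF IP x] .
  moreover have "J = cmp V d C y" using comp_of[OF JP y] .
  ultimately have "I = J" using cmp_eq[OF cr] by simp
  then show False using IJ by blast
qed

definition Tset :: "'a set \<Rightarrow> ('a \<Rightarrow> 'a \<Rightarrow> 'w) \<Rightarrow> 'a set \<Rightarrow> 'w set" where
  "Tset V d C = {dmod d I J | I J. I \<in> components V d C \<and> J \<in> components V d C \<and> I \<noteq> J}"

lemma type_of_np: "\<not> gallai_prime V d C \<Longrightarrow> type_of V d C = Values (Tset V d C)"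
  unfolding type_of_def Tset_def by simp




lemma level:
  assumes R: "robust V d C" and two: "\<exists>x\<in>C. \<exists>y\<in>C. x \<noteq> y" and NP: "\<not> gallai_prime V d C"
  shows "\<forall>x\<in>C. \<forall>y\<in>C. \<forall>z\<in>C. \<not> comp_rel V d C x y \<longrightarrow> \<not> comp_rel V d C y z \<longrightarrow> \<not> comp_rel V d C x z \<longrightarrow>
            (d x y, d y x) = (d x z, d z x) \<or> (d x y, d y x) = (d z y, d y z)"
    and "\<forall>x\<in>C. \<forall>y\<in>C. \<not> comp_rel V d C x y \<longrightarrow> {d x y, d y x} = Tset V d C"
proof -
  obtain x0 y0 where xy0: "x0 \<in> C" "y0 \<in> C" "x0 \<noteq> y0" using two by blast
  obtain a b where ab: "a \<in> V" "b \<in> V" "a \<noteq> b" "C = S_mod V d {a, b}" using robust_two[OF R xy0] by blast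
  have Cs: "strong_module V d C" using robust_strong[OF R] .
  have Cm: "is_module V d C" using strong_mod[OF Cs] .
  define P where "P = components V d C"
  have H1P: "SS = P" if "strong_module P (dmod d) SS" "I \<in> SS" "J \<in> SS" "I \<noteq> J" for SS I J
    using H1_transfer[OF ab(3,1,2,4)] that unfolding P_def by blast
  have T3: "tri P (dmod d)" if three: "\<exists>I\<in>P. \<exists>J\<in>P. \<exists>K\<in>P. I \<noteq> J \<and> I \<noteq> K \<and> J \<noteq> K"
  proof (rule tri.intro)
    show "\<And>S a b. strong_module P (dmod d) S \<Longrightarrow> a \<in> S \<Longrightarrow> b \<in> S \<Longrightarrow> a \<noteq> b \<Longrightarrow> S = P" using H1P by blast
    have "\<not> prime_struct P (dmod d)" using NP unfolding gallai_prime_def gallai_d_def P_def by simp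
    then obtain X where X: "is_module P (dmod d) X" "X \<noteq> {}" "\<not> (\<exists>u. X = {u})" "X \<noteq> P"
      unfolding prime_struct_def using three by blast
    obtain u where u: "u \<in> X" using X(2) by blast
    obtain v where v: "v \<in> X" "v \<noteq> u" using X(3) u by blast
    have "ntm P (dmod d) X" unfolding ntm_def using X(1,4) u v by blast
    then show "\<exists>M. ntm P (dmod d) M" by blast
  qed
  have PAIR: "(dmod d K L, dmod d L K) \<in> {(dmod d I J, dmod d J I), (dmod d J I, dmod d I J)}"
    if IP: "I \<in> P" "J \<in> P" "K \<in> P" "L \<in> P" "I \<noteq> J" "K \<noteq> L" for I J K L
  proof (cases "\<exists>I\<in>P. \<exists>J\<in>P. \<exists>K\<in>P. I \<noteq> J \<and> I \<noteq> K \<and> J \<noteq> K")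
    case True
    have T: "tri P (dmod d)" using T3[OF True] .
    obtain \<sigma> where sg: "\<forall>x\<in>P. \<forall>y\<in>P. x \<noteq> y \<longrightarrow> (dmod d x y, dmod d y x) \<in> {\<sigma>, prod.swap \<sigma>}"
      using tri.K0[OF T] by blast
    have 1: "(dmod d I J, dmod d J I) \<in> {\<sigma>, prod.swap \<sigma>}" using sg IP by blast
    have 2: "(dmod d K L, dmod d L K) \<in> {\<sigma>, prod.swap \<sigma>}" using sg IP by blast
    obtain p q where pq: "\<sigma> = (p, q)" by (cases \<sigma>)
    show ?thesis using 1 2 unfolding pq by auto
  next
    case False
    have "K = I \<or> K = J" using False IP by blast
    moreover have "L = I \<or> L = J" using False IP by blast
    ultimately show ?thesis using IP(6) by auto
  qed
  show "\<forall>x\<in>C. \<forall>y\<in>C. \<not> comp_rel V d C x y \<longrightarrow> {d x y, d y x} = Tset V d C"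
  proof (intro ballI impI)
    fix x y assume x: "x \<in> C" and y: "y \<in> C" and nxy: "\<not> comp_rel V d C x y"
    define I where "I = cmp V d C x"
    define J where "J = cmp V d C y"
    have IP: "I \<in> P" and JP: "J \<in> P" unfolding I_def J_def P_def
      using cmp_in[OF x, where V=V and d=d] cmp_in[OF y, where V=V and d=d] by blast+
    have IJ: "I \<noteq> J" unfolding I_def J_def using cmp_eq_iff[OF x y] nxy by blast
    have xI: "x \<in> I" and yJ: "y \<in> J" unfolding I_def J_def
      using cmp_self[OF x, where V=V and d=d] cmp_self[OF y, where V=V and d=d] by blast+
    have e1: "d x y = dmod d I J" using dmod_comp[OF Cm IP[unfolded P_def] JP[unfolded P_def] IJ xI yJ] .
    have e2: "d y x = dmod d J I" using dmod_comp[OF Cm JP[unfolded P_def] IP[unfolded P_def] IJ[symmetric] yJ xI] .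
    show "{d x y, d y x} = Tset V d C"
    proof
      show "{d x y, d y x} \<subseteq> Tset V d C"
        unfolding Tset_def e1 e2 using IP JP IJ unfolding P_def by blast
      show "Tset V d C \<subseteq> {d x y, d y x}"
      proof
        fix t assume "t \<in> Tset V d C"
        then obtain K L where KL: "t = dmod d K L" "K \<in> P" "L \<in> P" "K \<noteq> L" unfolding Tset_def P_def by blast
        have "(dmod d K L, dmod d L K) \<in> {(dmod d I J, dmod d J I), (dmod d J I, dmod d I J)}"
          using PAIR[OF IP JP KL(2,3) IJ KL(4)] .
        then show "t \<in> {d x y, d y x}" unfolding KL(1) e1 e2 by auto
      qed
    qed
  qed
  show "\<forall>x\<in>C. \<forall>y\<in>C. \<forall>z\<in>C. \<not> comp_rel V d C x y \<longrightarrow> \<not> comp_rel V d C y z \<longrightarrow> \<not> comp_rel V d C x z \<longrightarrow>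
            (d x y, d y x) = (d x z, d z x) \<or> (d x y, d y x) = (d z y, d y z)"
  proof (intro ballI impI)
    fix x y z assume x: "x \<in> C" and y: "y \<in> C" and z: "z \<in> C"
      and nxy: "\<not> comp_rel V d C x y" and nyz: "\<not> comp_rel V d C y z" and nxz: "\<not> comp_rel V d C x z"
    define I where "I = cmp V d C x"
    define J where "J = cmp V d C y"
    define K where "K = cmp V d C z"
    have IP: "I \<in> P" and JP: "J \<in> P" and KP: "K \<in> P" unfolding I_def J_def K_def P_def
      using cmp_in[OF x, where V=V and d=d] cmp_in[OF y, where V=V and d=d] cmp_in[OF z, where V=V and d=d] by blast+
    have IJ: "I \<noteq> J" unfolding I_def J_def using cmp_eq_iff[OF x y] nxy by blast
    have JK: "J \<noteq> K" unfolding J_def K_def using cmp_eq_iff[OF y z] nyz by blast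
    have IK: "I \<noteq> K" unfolding I_def K_def using cmp_eq_iff[OF x z] nxz by blast
    have xI: "x \<in> I" and yJ: "y \<in> J" and zK: "z \<in> K" unfolding I_def J_def K_def
      using cmp_self[OF x, where V=V and d=d] cmp_self[OF y, where V=V and d=d] cmp_self[OF z, where V=V and d=d] by blast+
    have T: "tri P (dmod d)" using T3 IP JP KP IJ JK IK by blast
    have tl: "(dmod d I J, dmod d J I) = (dmod d I K, dmod d K I) \<or> (dmod d I J, dmod d J I) = (dmod d K J, dmod d J K)"
      using tri.TL[OF T IP JP KP IJ JK IK] .
    have Cm': "is_module V d C" using Cm .
    note IP' = IP[unfolded P_def] and JP' = JP[unfolded P_def] and KP' = KP[unfolded P_def]
    have "d x y = dmod d I J" using dmod_comp[OF Cm IP' JP' IJ xI yJ] .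
    moreover have "d y x = dmod d J I" using dmod_comp[OF Cm JP' IP' IJ[symmetric] yJ xI] .
    moreover have "d x z = dmod d I K" using dmod_comp[OF Cm IP' KP' IK xI zK] .
    moreover have "d z x = dmod d K I" using dmod_comp[OF Cm KP' IP' IK[symmetric] zK xI] .
    moreover have "d z y = dmod d K J" using dmod_comp[OF Cm KP' JP' JK[symmetric] zK yJ] .
    moreover have "d y z = dmod d J K" using dmod_comp[OF Cm JP' KP' JK yJ zK] .
    ultimately show "(d x y, d y x) = (d x z, d z x) \<or> (d x y, d y x) = (d z y, d y z)" using tl by simp
  qed
qed

lemma opp: assumes "{a, b} = T" "{c, e} = T" "(a, b) \<noteq> (c, e)" shows "c = b \<and> e = a"
proof -
  have "{a, b} = {c, e}" using assms by simp
  then have "(a = c \<and> b = e) \<or> (a = e \<and> b = c)" by (simp add: doubleton_eq_iff)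
  then show ?thesis using assms(3) by auto
qed

lemma key_level:
  assumes Cm: "is_module V d C"
  and TL: "\<forall>x\<in>C. \<forall>y\<in>C. \<forall>z\<in>C. \<not> comp_rel V d C x y \<longrightarrow> \<not> comp_rel V d C y z \<longrightarrow> \<not> comp_rel V d C x z \<longrightarrow>
            (d x y, d y x) = (d x z, d z x) \<or> (d x y, d y x) = (d z y, d y z)"
  and y: "y \<in> C" and z: "z \<in> C" and dl: "\<delta> \<in> C" and nz: "\<not> comp_rel V d C \<delta> z"
  and sd: "(d y \<delta>, d \<delta> y) \<noteq> (d z \<delta>, d \<delta> z)" and op: "d z \<delta> = d \<delta> y" "d \<delta> z = d y \<delta>"
  shows "d y z = d y \<delta> \<and> d z y = d \<delta> y"
proof (cases "comp_rel V d C \<delta> y")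
  case True
  have Dm: "is_module V d (cmp V d C \<delta>)" using cmp_mod[OF Cm dl] .
  have zV: "z \<in> V" using z mod_sub[OF Cm] by blast
  have zD: "z \<notin> cmp V d C \<delta>" using nz unfolding cmp_iff .
  have yD: "y \<in> cmp V d C \<delta>" using True unfolding cmp_iff .
  have dD: "\<delta> \<in> cmp V d C \<delta>" using cmp_self[OF dl] .
  have "d z y = d z \<delta> \<and> d y z = d \<delta> z" using modD[OF Dm zV zD yD dD] .
  then show ?thesis using op by simp
next
  case ndy: False
  show ?thesis
  proof (cases "comp_rel V d C y z")
    case True
    have Ym: "is_module V d (cmp V d C y)" using cmp_mod[OF Cm y] .
    have dV: "\<delta> \<in> V" using dl mod_sub[OF Cm] by blast
    have dY: "\<delta> \<notin> cmp V d C y" using ndy cr_sym[of V d C y \<delta>] unfolding cmp_iff by blast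
    have yY: "y \<in> cmp V d C y" using cmp_self[OF y] .
    have zY: "z \<in> cmp V d C y" using True unfolding cmp_iff .
    have "d \<delta> y = d \<delta> z \<and> d y \<delta> = d z \<delta>" using modD[OF Ym dV dY yY zY] .
    then show ?thesis using sd by simp
  next
    case False
    have n2: "\<not> comp_rel V d C z \<delta>" using nz cr_sym[of V d C z \<delta>] by blast
    have n3: "\<not> comp_rel V d C y \<delta>" using ndy cr_sym[of V d C y \<delta>] by blast
    have "(d y z, d z y) = (d y \<delta>, d \<delta> y) \<or> (d y z, d z y) = (d \<delta> z, d z \<delta>)"
      using TL y z dl False n2 n3 by blast
    then show ?thesis using op by auto
  qed
qed




lemma core:
  assumes Am: "is_module V d A" and XA: "X \<subseteq> A" and Xs: "strong_module V d X" and AX: "A - X \<noteq> {}"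
  and Dm: "is_module V d D" and DX: "D \<subseteq> X" and DneX: "D \<noteq> X" and dl: "\<delta> \<in> D"
  and key: "\<And>y z. y \<in> A - D \<Longrightarrow> z \<in> A - D \<Longrightarrow> (d y \<delta>, d \<delta> y) \<noteq> (d z \<delta>, d \<delta> z) \<Longrightarrow> d y z = d y \<delta> \<and> d z y = d \<delta> y"
  shows False
proof -
  have AV: "A \<subseteq> V" using mod_sub[OF Am] .
  define s where "s z = (d z \<delta>, d \<delta> z)" for z
  define M where "M \<sigma> = D \<union> {z \<in> A - D. s z = \<sigma>}" for \<sigma>
  have Mmod: "is_module V d (M \<sigma>)" for \<sigma>
  proof (rule modI)
    show "M \<sigma> \<subseteq> V" using DX XA AV unfolding M_def by blast
    fix w m m' assume w: "w \<in> V" "w \<notin> M \<sigma>" and m: "m \<in> M \<sigma>" and m': "m' \<in> M \<sigma>"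
    have mA: "m \<in> A" "m' \<in> A" using m m' DX XA unfolding M_def by blast+
    show "d w m = d w m' \<and> d m w = d m' w"
    proof (cases "w \<in> A")
      case False show ?thesis using modD[OF Am w(1) False mA] .
    next
      case True
      have wD: "w \<notin> D" using w(2) unfolding M_def by blast
      have sw: "s w \<noteq> \<sigma>" using w(2) True wD unfolding M_def by blast
      have gen: "d w u = d w \<delta> \<and> d u w = d \<delta> w" if u: "u \<in> M \<sigma>" for u
      proof (cases "u \<in> D")
        case True show ?thesis using modD[OF Dm w(1) wD True dl] .
      next
        case False
        have u2: "u \<in> A - D" "s u = \<sigma>" using u False unfolding M_def by blast+
        have "s w \<noteq> s u" using sw u2(2) by simp
        then have "(d w \<delta>, d \<delta> w) \<noteq> (d u \<delta>, d \<delta> u)" unfolding s_def .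
        then show ?thesis using key[of w u] True wD u2(1) by blast
      qed
      have g1: "d w m = d w \<delta>" "d m w = d \<delta> w" using gen[OF m] by blast+
      have g2: "d w m' = d w \<delta>" "d m' w = d \<delta> w" using gen[OF m'] by blast+
      show ?thesis using g1 g2 by simp
    qed
  qed
  obtain u0 where u0: "u0 \<in> A" "u0 \<notin> X" using AX by blast
  obtain z0 where z0: "z0 \<in> X" "z0 \<notin> D" using DX DneX by blast
  have u0D: "u0 \<notin> D" using u0 DX by blast
  show False
  proof (cases "\<exists>u\<in>A-X. \<exists>z\<in>X-D. s u \<noteq> s z")
    case True
    then obtain u z where u: "u \<in> A" "u \<notin> X" and z: "z \<in> X" "z \<notin> D" and suz: "s u \<noteq> s z" by blast
    have "X \<subseteq> M (s u) \<or> M (s u) \<subseteq> X \<or> X \<inter> M (s u) = {}" using strongD[OF Xs Mmod] .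
    moreover have "u \<in> M (s u)" using u DX unfolding M_def by blast
    moreover have "z \<notin> M (s u)" using z suz unfolding M_def by auto
    moreover have "\<delta> \<in> M (s u)" "\<delta> \<in> X" using dl DX unfolding M_def by blast+
    ultimately show False using u z by blast
  next
    case False
    have allS: "s m = s z0" if m: "m \<in> A - D" for m
    proof (cases "m \<in> X")
      case True
      have "s u0 = s m" using False u0 True m by blast
      moreover have "s u0 = s z0" using False u0 z0 by blast
      ultimately show ?thesis by simp
    next
      case mX: False
      show ?thesis using False m mX z0 by blast
    qed
    have Nmod: "is_module V d (A - D)"
    proof (rule modI)
      show "A - D \<subseteq> V" using AV by blast
      fix w m m' assume w: "w \<in> V" "w \<notin> A - D" and m: "m \<in> A - D" and m': "m' \<in> A - D"
      show "d w m = d w m' \<and> d m w = d m' w"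
      proof (cases "w \<in> A")
        case False
        have mA: "m \<in> A" "m' \<in> A" using m m' by blast+
        show ?thesis using modD[OF Am w(1) False mA] .
      next
        case True
        have wD: "w \<in> D" using w(2) True by blast
        have mV: "m \<in> V" "m' \<in> V" using m m' AV by blast+
        have mD: "m \<notin> D" "m' \<notin> D" using m m' by blast+
        have 1: "d m w = d m \<delta> \<and> d w m = d \<delta> m" using modD[OF Dm mV(1) mD(1) wD dl] .
        have 2: "d m' w = d m' \<delta> \<and> d w m' = d \<delta> m'" using modD[OF Dm mV(2) mD(2) wD dl] .
        have 3: "s m = s m'" using allS[OF m] allS[OF m'] by simp
        have 4: "d m \<delta> = d m' \<delta>" "d \<delta> m = d \<delta> m'" using 3 unfolding s_def by simp_all
        show ?thesis using 1 2 4 by metis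
      qed
    qed
    have "X \<subseteq> A - D \<or> A - D \<subseteq> X \<or> X \<inter> (A - D) = {}" using strongD[OF Xs Nmod] .
    then show False using dl DX u0 u0D z0 XA by blast
  qed
qed

lemma finish:
  assumes Am: "is_module V d A"
  and TLA: "\<forall>x\<in>A. \<forall>y\<in>A. \<forall>z\<in>A. \<not> comp_rel V d A x y \<longrightarrow> \<not> comp_rel V d A y z \<longrightarrow> \<not> comp_rel V d A x z \<longrightarrow>
            (d x y, d y x) = (d x z, d z x) \<or> (d x y, d y x) = (d z y, d y z)"
  and dA: "\<delta> \<in> A" and Xdef: "X = cmp V d A \<delta>" and XneA: "X \<noteq> A"
  and Dm: "is_module V d D" and DX: "D \<subseteq> X" and DneX: "D \<noteq> X" and dl: "\<delta> \<in> D"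
  and sideA: "\<And>u. u \<in> A - X \<Longrightarrow> {d u \<delta>, d \<delta> u} = T"
  and sideX: "\<And>z. z \<in> X - D \<Longrightarrow> {d z \<delta>, d \<delta> z} = T"
  and keyX: "\<And>y z. y \<in> X - D \<Longrightarrow> z \<in> X - D \<Longrightarrow> (d y \<delta>, d \<delta> y) \<noteq> (d z \<delta>, d \<delta> z) \<Longrightarrow>
               d z \<delta> = d \<delta> y \<Longrightarrow> d \<delta> z = d y \<delta> \<Longrightarrow> d y z = d y \<delta> \<and> d z y = d \<delta> y"
  shows False
proof -
  have Xs: "strong_module V d X" unfolding Xdef using cmp_strong[OF Am dA] .
  have Xm: "is_module V d X" using strong_mod[OF Xs] .
  have XA: "X \<subseteq> A" unfolding Xdef using cmp_sub[of V d A \<delta>] .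
  have AX: "A - X \<noteq> {}" using XA XneA by blast
  have AV: "A \<subseteq> V" using mod_sub[OF Am] .
  have dX: "\<delta> \<in> X" unfolding Xdef using cmp_self[OF dA] .
  have sides: "{d z \<delta>, d \<delta> z} = T" if z: "z \<in> A - D" for z
  proof (cases "z \<in> X")
    case True then show ?thesis using sideX z by blast
  next
    case False then show ?thesis using sideA z by blast
  qed
  have key: "d y z = d y \<delta> \<and> d z y = d \<delta> y"
    if y: "y \<in> A - D" and z: "z \<in> A - D" and sd: "(d y \<delta>, d \<delta> y) \<noteq> (d z \<delta>, d \<delta> z)" for y z
  proof -
    have op: "d z \<delta> = d \<delta> y \<and> d \<delta> z = d y \<delta>" using opp[OF sides[OF y] sides[OF z] sd] .
    have yV: "y \<in> V" and zV: "z \<in> V" using y z AV by blast+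
    show ?thesis
    proof (cases "y \<in> X")
      case yX: True
      show ?thesis
      proof (cases "z \<in> X")
        case True
        show ?thesis using keyX[OF _ _ sd] y z yX True op by blast
      next
        case False
        have "d z y = d z \<delta> \<and> d y z = d \<delta> z" using modD[OF Xm zV False yX dX] .
        then show ?thesis using op by simp
      qed
    next
      case yX: False
      show ?thesis
      proof (cases "z \<in> X")
        case True
        show ?thesis using modD[OF Xm yV yX True dX] .
      next
        case False
        have yA: "y \<in> A" and zA: "z \<in> A" using y z by blast+
        have nz: "\<not> comp_rel V d A \<delta> z" using False unfolding Xdef cmp_iff .
        show ?thesis using key_level[OF Am TLA yA zA dA nz sd] op by blast
      qed
    qed
  qed
  show False using core[OF Am XA Xs AX Dm DX DneX dl key] by blast
qed




theorem proposition6p10: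
  fixes V :: "'a set" and d :: "'a \<Rightarrow> 'a \<Rightarrow> 'w" and A B :: "'a set"
  assumes "robust V d A" and "robust V d B"
    and "\<exists>x\<in>A. \<exists>y\<in>A. x \<noteq> y" and "\<exists>x\<in>B. \<exists>y\<in>B. x \<noteq> y"
    and "B \<subset> A"
    and "\<not> gallai_prime V d A" and "\<not> gallai_prime V d B"
    and "type_of V d A = type_of V d B"
  shows "\<exists>C. robust V d C \<and> B \<subset> C \<and> C \<subset> A \<and> type_of V d C \<noteq> type_of V d A"
proof (rule ccontr)
  assume H: "\<not> (\<exists>C. robust V d C \<and> B \<subset> C \<and> C \<subset> A \<and> type_of V d C \<noteq> type_of V d A)"
  have hyp: "type_of V d C = type_of V d A" if "robust V d C" "B \<subset> C" "C \<subset> A" for C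
    using H that by blast
  obtain xa ya where A2: "xa \<in> A" "ya \<in> A" "xa \<noteq> ya" using assms(3) by blast
  obtain a1 a2 where a: "a1 \<in> V" "a2 \<in> V" "a1 \<noteq> a2" "A = S_mod V d {a1, a2}"
    using robust_two[OF assms(1) A2] by blast
  obtain xb yb where B2: "xb \<in> B" "yb \<in> B" "xb \<noteq> yb" using assms(4) by blast
  obtain b1 b2 where b: "b1 \<in> V" "b2 \<in> V" "b1 \<noteq> b2" "B = S_mod V d {b1, b2}"
    using robust_two[OF assms(2) B2] by blast
  have As: "strong_module V d A" using robust_strong[OF assms(1)] .
  have Am: "is_module V d A" using strong_mod[OF As] .
  have Bs: "strong_module V d B" using robust_strong[OF assms(2)] .
  have Bm: "is_module V d B" using strong_mod[OF Bs] .
  have AV: "A \<subseteq> V" using mod_sub[OF Am] .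
  define T where "T = Tset V d A"
  have tA: "type_of V d A = Values T" using type_of_np[OF assms(6)] unfolding T_def .
  have TB: "Tset V d B = T" using type_of_np[OF assms(7)] assms(8) tA by simp
  have levA1: "\<forall>x\<in>A. \<forall>y\<in>A. \<forall>z\<in>A. \<not> comp_rel V d A x y \<longrightarrow> \<not> comp_rel V d A y z \<longrightarrow> \<not> comp_rel V d A x z \<longrightarrow>
            (d x y, d y x) = (d x z, d z x) \<or> (d x y, d y x) = (d z y, d y z)"
    using level(1)[OF assms(1) assms(3) assms(6)] .
  have levA2: "\<forall>x\<in>A. \<forall>y\<in>A. \<not> comp_rel V d A x y \<longrightarrow> {d x y, d y x} = Tset V d A"
    using level(2)[OF assms(1) assms(3) assms(6)] .
  have levB1: "\<forall>x\<in>B. \<forall>y\<in>B. \<forall>z\<in>B. \<not> comp_rel V d B x y \<longrightarrow> \<not> comp_rel V d B y z \<longrightarrow> \<not> comp_rel V d B x z \<longrightarrow>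
            (d x y, d y x) = (d x z, d z x) \<or> (d x y, d y x) = (d z y, d y z)"
    using level(1)[OF assms(2) assms(4) assms(7)] .
  have levB2: "\<forall>x\<in>B. \<forall>y\<in>B. \<not> comp_rel V d B x y \<longrightarrow> {d x y, d y x} = Tset V d B"
    using level(2)[OF assms(2) assms(4) assms(7)] .
  have b1B: "b1 \<in> B" using Smod_sup[of "{b1, b2}" V d] b(4) by blast
  have BA: "B \<subseteq> A" "B \<noteq> A" using assms(5) by blast+
  have b1A: "b1 \<in> A" using b1B BA by blast
  define X where "X = cmp V d A b1"
  have XneA: "X \<noteq> A" unfolding X_def using cmp_proper[OF a(3) a(4) b1A] .
  have Xs: "strong_module V d X" unfolding X_def using cmp_strong[OF Am b1A] .
  have Xm: "is_module V d X" using strong_mod[OF Xs] .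
  have XA: "X \<subseteq> A" unfolding X_def using cmp_sub[of V d A b1] .
  have BX: "B \<subseteq> X"
  proof
    fix y assume y: "y \<in> B"
    have "comp_rel V d A b1 y" using cr_strong[OF Bs assms(5) b1B y] .
    then show "y \<in> X" unfolding X_def cmp_iff .
  qed
  have sideA: "{d u b1, d b1 u} = T" if u: "u \<in> A - X" for u
  proof -
    have "u \<notin> X" using u by blast
    then have "\<not> comp_rel V d A b1 u" unfolding X_def cmp_iff .
    then have n: "\<not> comp_rel V d A u b1" using cr_sym[of V d A u b1] by blast
    have uA: "u \<in> A" using u by blast
    show ?thesis using levA2 uA b1A n unfolding T_def by blast
  qed
  show False
  proof (cases "X = B")
    case True
    define D where "D = cmp V d B b1"
    have Dm: "is_module V d D" unfolding D_def using cmp_mod[OF Bm b1B] .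
    have DB: "D \<subseteq> B" unfolding D_def using cmp_sub[of V d B b1] .
    have DneB: "D \<noteq> B" unfolding D_def using cmp_proper[OF b(3) b(4) b1B] .
    have b1D: "b1 \<in> D" unfolding D_def using cmp_self[OF b1B] .
    have sideX: "{d z b1, d b1 z} = T" if z: "z \<in> X - D" for z
    proof -
      have zB: "z \<in> B" using z True by blast
      have "z \<notin> D" using z by blast
      then have "\<not> comp_rel V d B b1 z" unfolding D_def cmp_iff .
      then have n: "\<not> comp_rel V d B z b1" using cr_sym[of V d B z b1] by blast
      show ?thesis using levB2 zB b1B n TB by blast
    qed
    have keyX: "d y z = d y b1 \<and> d z y = d b1 y"
      if y: "y \<in> X - D" and z: "z \<in> X - D" and sd: "(d y b1, d b1 y) \<noteq> (d z b1, d b1 z)"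
        and op1: "d z b1 = d b1 y" and op2: "d b1 z = d y b1" for y z
    proof -
      have yB: "y \<in> B" and zB: "z \<in> B" using y z True by blast+
      have "z \<notin> D" using z by blast
      then have nz: "\<not> comp_rel V d B b1 z" unfolding D_def cmp_iff .
      show ?thesis using key_level[OF Bm levB1 yB zB b1B nz sd op1 op2] .
    qed
    have DX: "D \<subseteq> X" and DneX: "D \<noteq> X" using DB DneB True by blast+
    show False using finish[OF Am levA1 b1A X_def XneA Dm DX DneX b1D sideA sideX keyX] by blast
  next
    case XneB: False
    define Cz where "Cz z = S_mod V d {b1, z}" for z
    have lev: "robust V d (Cz z) \<and> strong_module V d (Cz z) \<and> b1 \<in> Cz z \<and> z \<in> Cz z \<and> B \<subseteq> Cz z
        \<and> \<not> comp_rel V d (Cz z) b1 z \<and> Tset V d (Cz z) = T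
        \<and> (\<forall>x\<in>Cz z. \<forall>y\<in>Cz z. \<forall>w\<in>Cz z. \<not> comp_rel V d (Cz z) x y \<longrightarrow> \<not> comp_rel V d (Cz z) y w \<longrightarrow> \<not> comp_rel V d (Cz z) x w \<longrightarrow>
            (d x y, d y x) = (d x w, d w x) \<or> (d x y, d y x) = (d w y, d y w))
        \<and> (\<forall>x\<in>Cz z. \<forall>y\<in>Cz z. \<not> comp_rel V d (Cz z) x y \<longrightarrow> {d x y, d y x} = Tset V d (Cz z))"
      if z: "z \<in> X - B" for z
    proof -
      have zV: "z \<in> V" using z XA AV by blast
      have bz: "b1 \<noteq> z" using z b1B by blast
      have sub: "{b1, z} \<subseteq> V" using zV b(1) by blast
      have Czs: "strong_module V d (Cz z)" unfolding Cz_def using Smod_strong[OF sub] .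
      have Czm: "is_module V d (Cz z)" using strong_mod[OF Czs] .
      have R: "robust V d (Cz z)" unfolding robust_def using Czm b(1) zV bz unfolding Cz_def by blast
      have b1C: "b1 \<in> Cz z" and zC: "z \<in> Cz z" unfolding Cz_def using Smod_sup[of "{b1, z}" V d] by blast+
      have CX: "Cz z \<subseteq> X" unfolding Cz_def using Smod_least[OF Xs, of "{b1, z}"] z BX b1B by blast
      have "B \<subseteq> Cz z \<or> Cz z \<subseteq> B \<or> B \<inter> Cz z = {}" using strongD[OF Bs Czm] .
      then have BC: "B \<subseteq> Cz z" using b1B b1C zC z by blast
      have BsC: "B \<subset> Cz z" using BC zC z by blast
      have CsA: "Cz z \<subset> A" using CX XA XneA by blast
      have ty: "type_of V d (Cz z) = Values T" using hyp[OF R BsC CsA] tA by simp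
      have np: "\<not> gallai_prime V d (Cz z)"
      proof
        assume "gallai_prime V d (Cz z)"
        then have "type_of V d (Cz z) = Prime" unfolding type_of_def by simp
        then show False using ty by simp
      qed
      have TC: "Tset V d (Cz z) = T" using type_of_np[OF np] ty by simp
      have two: "\<exists>x\<in>Cz z. \<exists>y\<in>Cz z. x \<noteq> y" using b1C zC bz by blast
      have ncr: "\<not> comp_rel V d (Cz z) b1 z" using cr_not_ab[OF bz, of "Cz z" V d] unfolding Cz_def by blast
      show ?thesis using R Czs b1C zC BC ncr TC level[OF R two np] by blast
    qed
    have sideX: "{d z b1, d b1 z} = T" if z: "z \<in> X - B" for z
    proof -
      have L: "\<not> comp_rel V d (Cz z) b1 z" "Tset V d (Cz z) = T" "b1 \<in> Cz z" "z \<in> Cz z"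
        "\<forall>x\<in>Cz z. \<forall>y\<in>Cz z. \<not> comp_rel V d (Cz z) x y \<longrightarrow> {d x y, d y x} = Tset V d (Cz z)"
        using lev[OF z] by blast+
      have n: "\<not> comp_rel V d (Cz z) z b1" using L(1) cr_sym[of V d "Cz z" z b1] by blast
      show ?thesis using L(2-5) n by blast
    qed
    have keyX: "d y z = d y b1 \<and> d z y = d b1 y"
      if y: "y \<in> X - B" and z: "z \<in> X - B" and sd: "(d y b1, d b1 y) \<noteq> (d z b1, d b1 z)"
        and op1: "d z b1 = d b1 y" and op2: "d b1 z = d y b1" for y z
    proof -
      have Ly: "strong_module V d (Cz y)" "b1 \<in> Cz y" "y \<in> Cz y" "\<not> comp_rel V d (Cz y) b1 y"
        "\<forall>x\<in>Cz y. \<forall>u\<in>Cz y. \<forall>w\<in>Cz y. \<not> comp_rel V d (Cz y) x u \<longrightarrow> \<not> comp_rel V d (Cz y) u w \<longrightarrow> \<not> comp_rel V d (Cz y) x w \<longrightarrow>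
            (d x u, d u x) = (d x w, d w x) \<or> (d x u, d u x) = (d w u, d u w)"
        using lev[OF y] by blast+
      have Lz: "strong_module V d (Cz z)" "b1 \<in> Cz z" "z \<in> Cz z" "\<not> comp_rel V d (Cz z) b1 z"
        "\<forall>x\<in>Cz z. \<forall>u\<in>Cz z. \<forall>w\<in>Cz z. \<not> comp_rel V d (Cz z) x u \<longrightarrow> \<not> comp_rel V d (Cz z) u w \<longrightarrow> \<not> comp_rel V d (Cz z) x w \<longrightarrow>
            (d x u, d u x) = (d x w, d w x) \<or> (d x u, d u x) = (d w u, d u w)"
        using lev[OF z] by blast+
      have "Cz y \<subseteq> Cz z \<or> Cz z \<subseteq> Cz y \<or> Cz y \<inter> Cz z = {}" using strongD[OF Ly(1) strong_mod[OF Lz(1)]] .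
      then have "Cz y \<subseteq> Cz z \<or> Cz z \<subseteq> Cz y" using Ly(2) Lz(2) by blast
      then show ?thesis
      proof
        assume "Cz y \<subseteq> Cz z"
        then have yC: "y \<in> Cz z" using Ly(3) by blast
        show ?thesis using key_level[OF strong_mod[OF Lz(1)] Lz(5) yC Lz(3) Lz(2) Lz(4) sd op1 op2] .
      next
        assume "Cz z \<subseteq> Cz y"
        then have zC: "z \<in> Cz y" using Lz(3) by blast
        have sd': "(d z b1, d b1 z) \<noteq> (d y b1, d b1 y)" using sd by metis
        have "d z y = d z b1 \<and> d y z = d b1 z"
          using key_level[OF strong_mod[OF Ly(1)] Ly(5) zC Ly(3) Ly(2) Ly(4) sd' op2[symmetric] op1[symmetric]] .
        then show ?thesis using op1 op2 by simp
      qed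
    qed
    have XB': "B \<noteq> X" using XneB by blast
    show False using finish[OF Am levA1 b1A X_def XneA Bm BX XB' b1B sideA sideX keyX] by blast
  qed
qed



end
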